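(* Let $H$ be a complex Hilbert space and let $\Delta:K(H)\to K(H)$ be a weak-2-local $^*$-derivation. Then $\Delta$ is a quasi-linear operator on $K(H)$.
   Context: $K(H)$ is the C$^*$-algebra of compact operators on $H$. A $^*$-derivation on a C$^*$-algebra $A$ is a linear map $D:A\to A$ with $D(ab)=D(a)b+aD(b)$ and $D(a^* )=D(a)^*$. A (not necessarily linear) map $\Delta:A\to A$ is a weak-2-local $^*$-derivation if for every $a,b\in A$ and every $\phi\in A^*$ there exists a $^*$-derivation $D_{a,b,\phi}$ with $\phi\Delta(a)=\phi D_{a,b,\phi}(a)$ and $\phi\Delta(b)=\phi D_{a,b,\phi}(b)$. For a self-adjoint $x\in A$, $A_x$ is the C$^*$-subalgebra generated by $x$. A map $\mu:A\to X$ ($X$ a Banach space) is a quasi-linear operator if (a) $\mu|_{A_x}$ is linear for each self-adjoint $x\in A$, and (b) $\mu(a+ib)=\mu(a)+i\mu(b)$ whenever $a,b$ are self-adjoint elements of $A$. *)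

theory Defs
  imports "HOL-Analysis.Analysis"
begin

class complex_vector = real_vector +
  fixes scaleC :: "complex \<Rightarrow> 'a \<Rightarrow> 'a" (infixr "*\<^sub>C" 75)
  assumes scaleC_add_right: "a *\<^sub>C (x + y) = a *\<^sub>C x + a *\<^sub>C y"
    and scaleC_add_left: "(a + b) *\<^sub>C x = a *\<^sub>C x + b *\<^sub>C x"
    and scaleC_scaleC: "a *\<^sub>C (b *\<^sub>C x) = (a * b) *\<^sub>C x"
    and scaleC_one: "1 *\<^sub>C x = x"
    and scaleR_scaleC: "r *\<^sub>R x = complex_of_real r *\<^sub>C x"

class complex_normed_vector = complex_vector + real_normed_vector +
  assumes norm_scaleC: "norm (a *\<^sub>C x) = cmod a * norm x"

class complex_inner = complex_normed_vector +
  fixes cinner :: "'a \<Rightarrow> 'a \<Rightarrow> complex"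
  assumes cinner_commute: "cinner x y = cnj (cinner y x)"
    and cinner_add_left: "cinner (x + y) z = cinner x z + cinner y z"
    and cinner_scaleC_left: "cinner (a *\<^sub>C x) y = cnj a * cinner x y"
    and cinner_ge_zero: "0 \<le> Re (cinner x x)"
    and cinner_eq_zero_iff: "cinner x x = 0 \<longleftrightarrow> x = 0"
    and norm_eq_sqrt_cinner: "norm x = sqrt (Re (cinner x x))"

class chilbert_space = complex_inner + complete_space

definition clinear_map :: "('a::complex_vector \<Rightarrow> 'b::complex_vector) \<Rightarrow> bool" where
  "clinear_map T \<longleftrightarrow> (\<forall>x y. T (x + y) = T x + T y) \<and> (\<forall>c x. T (c *\<^sub>C x) = c *\<^sub>C T x)"

definition compact_op :: "('a::complex_normed_vector \<Rightarrow> 'a) \<Rightarrow> bool" where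
  "compact_op T \<longleftrightarrow> clinear_map T \<and> compact (closure (T ` cball 0 1))"

definition Kop :: "('a::complex_normed_vector \<Rightarrow> 'a) set" where
  "Kop = {T. compact_op T}"

text \<open>Hilbert adjoint (exists and is unique for bounded operators, by Riesz).\<close>
definition adj :: "('a::complex_inner \<Rightarrow> 'a) \<Rightarrow> ('a \<Rightarrow> 'a)" where
  "adj T = (\<lambda>y. THE z. \<forall>x. cinner (T x) y = cinner x z)"

definition opadd :: "('a::complex_vector \<Rightarrow> 'a) \<Rightarrow> ('a \<Rightarrow> 'a) \<Rightarrow> ('a \<Rightarrow> 'a)" where
  "opadd S T = (\<lambda>v. S v + T v)"

definition opscale :: "complex \<Rightarrow> ('a::complex_vector \<Rightarrow> 'a) \<Rightarrow> ('a \<Rightarrow> 'a)" where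
  "opscale c T = (\<lambda>v. c *\<^sub>C T v)"

definition gen_cstar :: "('a::chilbert_space \<Rightarrow> 'a) \<Rightarrow> ('a \<Rightarrow> 'a) set" where
  "gen_cstar x = \<Inter>{B. B \<subseteq> Kop \<and> x \<in> B
      \<and> (\<forall>a\<in>B. \<forall>b\<in>B. opadd a b \<in> B)
      \<and> (\<forall>c. \<forall>a\<in>B. opscale c a \<in> B)
      \<and> (\<forall>a\<in>B. \<forall>b\<in>B. a \<circ> b \<in> B)
      \<and> (\<forall>a\<in>B. adj a \<in> B)
      \<and> (\<forall>f S. (\<forall>n. f n \<in> B) \<and> S \<in> Kop \<and>
            (\<lambda>n. onorm (\<lambda>v. f n v - S v)) \<longlonglongrightarrow> 0 \<longrightarrow> S \<in> B)}"

definition dual_K :: "(('a::chilbert_space \<Rightarrow> 'a) \<Rightarrow> complex) \<Rightarrow> bool" where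
  "dual_K \<phi> \<longleftrightarrow> (\<forall>a\<in>Kop. \<forall>b\<in>Kop. \<phi> (opadd a b) = \<phi> a + \<phi> b)
      \<and> (\<forall>c. \<forall>a\<in>Kop. \<phi> (opscale c a) = c * \<phi> a)
      \<and> (\<exists>C. \<forall>a\<in>Kop. cmod (\<phi> a) \<le> C * onorm a)"

definition star_derivation :: "(('a::chilbert_space \<Rightarrow> 'a) \<Rightarrow> ('a \<Rightarrow> 'a)) \<Rightarrow> bool" where
  "star_derivation D \<longleftrightarrow> (\<forall>a\<in>Kop. D a \<in> Kop)
      \<and> (\<forall>a\<in>Kop. \<forall>b\<in>Kop. D (opadd a b) = opadd (D a) (D b))
      \<and> (\<forall>c. \<forall>a\<in>Kop. D (opscale c a) = opscale c (D a))
      \<and> (\<forall>a\<in>Kop. \<forall>b\<in>Kop. D (a \<circ> b) = opadd (D a \<circ> b) (a \<circ> D b))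
      \<and> (\<forall>a\<in>Kop. D (adj a) = adj (D a))"

definition weak_2_local_star_derivation :: "(('a::chilbert_space \<Rightarrow> 'a) \<Rightarrow> ('a \<Rightarrow> 'a)) \<Rightarrow> bool" where
  "weak_2_local_star_derivation \<Delta> \<longleftrightarrow> (\<forall>a\<in>Kop. \<Delta> a \<in> Kop)
      \<and> (\<forall>a\<in>Kop. \<forall>b\<in>Kop. \<forall>\<phi>. dual_K \<phi> \<longrightarrow>
           (\<exists>D. star_derivation D \<and> \<phi> (\<Delta> a) = \<phi> (D a) \<and> \<phi> (\<Delta> b) = \<phi> (D b)))"

text \<open>Quasi-linear operator, for maps with values in X = K(H) (the case needed here).\<close>
definition quasi_linear :: "(('a::chilbert_space \<Rightarrow> 'a) \<Rightarrow> ('a \<Rightarrow> 'a)) \<Rightarrow> bool" where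
  "quasi_linear \<mu> \<longleftrightarrow>
      (\<forall>x\<in>Kop. adj x = x \<longrightarrow>
          (\<forall>a\<in>gen_cstar x. \<forall>b\<in>gen_cstar x. \<mu> (opadd a b) = opadd (\<mu> a) (\<mu> b))
        \<and> (\<forall>c. \<forall>a\<in>gen_cstar x. \<mu> (opscale c a) = opscale c (\<mu> a)))
    \<and> (\<forall>a\<in>Kop. \<forall>b\<in>Kop. adj a = a \<longrightarrow> adj b = b \<longrightarrow>
          \<mu> (opadd a (opscale \<i> b)) = opadd (\<mu> a) (opscale \<i> (\<mu> b)))"

end

theory Submission
  imports Defs
begin


lemma scaleC_zero_left[simp]: "(0::complex) *\<^sub>C x = 0"
  using scaleR_scaleC[of 0 x] by simp
lemma scaleC_zero_right[simp]: "a *\<^sub>C (0::'a::complex_vector) = 0"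
  using scaleC_add_right[of a 0 0] by simp
lemma scaleC_minus_right: "a *\<^sub>C (- x) = - (a *\<^sub>C (x::'a::complex_vector))"
  proof -
  have "a *\<^sub>C x + a *\<^sub>C (-x) = 0" using scaleC_add_right[of a x "-x"] by simp
  thus ?thesis by (simp add: eq_neg_iff_add_eq_0 add.commute)
qed
lemma scaleC_diff_right: "a *\<^sub>C (x - y) = a *\<^sub>C x - a *\<^sub>C (y::'a::complex_vector)"
  unfolding diff_conv_add_uminus by (simp only: scaleC_add_right scaleC_minus_right)
lemma scaleC_minus_left: "(- a) *\<^sub>C x = - (a *\<^sub>C (x::'a::complex_vector))"
  proof -
  have "a *\<^sub>C x + (-a) *\<^sub>C x = 0" using scaleC_add_left[of a "-a" x] by simp
  thus ?thesis by (simp add: eq_neg_iff_add_eq_0 add.commute)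
qed
lemma scaleC_diff_left: "(a - b) *\<^sub>C x = a *\<^sub>C x - b *\<^sub>C (x::'a::complex_vector)"
  unfolding diff_conv_add_uminus by (simp only: scaleC_add_left scaleC_minus_left)
lemma scaleC_of_real: "complex_of_real r *\<^sub>C x = r *\<^sub>R x"
  by (simp add: scaleR_scaleC)

lemma cinner_add_right: "cinner x (y + z) = cinner x y + cinner x z"
  using cinner_commute[of x "y+z"] cinner_commute[of y x] cinner_commute[of z x] by (simp add: cinner_add_left)
lemma cinner_scaleC_right: "cinner x (a *\<^sub>C y) = a * cinner x y"
  using cinner_commute[of x "a *\<^sub>C y"] cinner_commute[of y x] by (simp add: cinner_scaleC_left)
lemma cinner_zero_left[simp]: "cinner 0 y = 0"
  using cinner_add_left[of 0 0 y] by simp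
lemma cinner_zero_right[simp]: "cinner y 0 = 0"
  using cinner_commute[of y 0] by simp
lemma cinner_minus_left: "cinner (- x) y = - cinner x y"
  proof -
  have "cinner x y + cinner (-x) y = 0" using cinner_add_left[of x "-x" y] by simp
  thus ?thesis by (simp add: eq_neg_iff_add_eq_0 add.commute)
qed
lemma cinner_minus_right: "cinner y (- x) = - cinner y x"
  proof -
  have "cinner y x + cinner y (-x) = 0" using cinner_add_right[of y x "-x"] by simp
  thus ?thesis by (simp add: eq_neg_iff_add_eq_0 add.commute)
qed
lemma cinner_diff_left: "cinner (x - z) y = cinner x y - cinner z y"
  unfolding diff_conv_add_uminus by (simp only: cinner_add_left cinner_minus_left)
lemma cinner_diff_right: "cinner y (x - z) = cinner y x - cinner y z"
  unfolding diff_conv_add_uminus by (simp only: cinner_add_right cinner_minus_right)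
lemma cinner_scaleR_left: "cinner (r *\<^sub>R x) y = r * cinner x y"
  by (simp add: scaleR_scaleC cinner_scaleC_left)
lemma cinner_scaleR_right: "cinner x (r *\<^sub>R y) = r * cinner x y"
  by (simp add: scaleR_scaleC cinner_scaleC_right)

lemma cinner_self_real: "cinner x x = complex_of_real ((norm x)\<^sup>2)"
proof -
  have "Im (cinner x x) = 0" using arg_cong[OF cinner_commute[of x x], of Im] by simp
  moreover have "Re (cinner x x) = (norm x)\<^sup>2" using norm_eq_sqrt_cinner[of x] cinner_ge_zero[of x] by simp
  ultimately show ?thesis by (simp add: complex_eq_iff)
qed

lemma cinner_self_zero_iff: "cinner x x = 0 \<longleftrightarrow> x = 0" by (rule cinner_eq_zero_iff)

lemma norm_add_sq: "(norm (x + y))\<^sup>2 = (norm x)\<^sup>2 + 2 * Re (cinner x y) + (norm y)\<^sup>2"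
proof -
  have "cinner (x+y) (x+y) = cinner x x + cinner x y + cinner y x + cinner y y"
    by (simp add: cinner_add_left cinner_add_right)
  hence "Re (cinner (x+y) (x+y)) = Re (cinner x x) + Re (cinner x y) + Re (cinner y x) + Re (cinner y y)" by simp
  moreover have "Re (cinner y x) = Re (cinner x y)" using cinner_commute[of y x] by simp
  ultimately show ?thesis by (simp add: cinner_self_real)
qed

lemma norm_diff_sq: "(norm (x - y))\<^sup>2 = (norm x)\<^sup>2 - 2 * Re (cinner x y) + (norm y)\<^sup>2"
  using norm_add_sq[of x "-y"] by (simp add: cinner_minus_right)

lemma Re_cinner_le: "\<bar>Re (cinner x y)\<bar> \<le> norm x * norm y"
proof (cases "y = 0")
  case True then show ?thesis by simp
next
  case False
  define R where "R = Re (cinner x y)"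
  define n where "n = (norm y)\<^sup>2"
  have n: "n > 0" using False by (simp add: n_def)
  have "0 \<le> (norm (x - (R/n) *\<^sub>R y))\<^sup>2" by simp
  also have "\<dots> = (norm x)\<^sup>2 - 2 * (R/n) * R + (R/n)^2 * n"
  proof -
    have a: "(norm ((R/n) *\<^sub>R y))^2 = (R/n)^2 * n" by (simp add: n_def power_mult_distrib power_divide)
    have b: "Re (cinner x ((R/n) *\<^sub>R y)) = (R/n) * R" by (simp add: cinner_scaleR_right R_def)
    show ?thesis unfolding norm_diff_sq a b by simp
  qed
  also have "\<dots> = (norm x)\<^sup>2 - R^2 / n" using n by (simp add: field_simps power2_eq_square)
  finally have "R^2 \<le> (norm x)\<^sup>2 * n" using n by (simp add: field_simps)
  hence "R^2 \<le> (norm x * norm y)^2" by (simp add: n_def power_mult_distrib)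
  thus ?thesis using power2_le_imp_le[of "\<bar>R\<bar>" "norm x * norm y"] unfolding R_def by simp
qed


lemma cauchy_schwarz: "cmod (cinner x y) \<le> norm x * norm y"
proof (cases "cinner x y = 0")
  case True then show ?thesis by simp
next
  case False
  define c where "c = cnj (cinner x y) / cmod (cinner x y)"
  have cm: "cmod c = 1" using False by (simp add: c_def norm_divide)
  have "c * cinner x y = complex_of_real (cmod (cinner x y))"
    proof -
    have "cnj (cinner x y) * cinner x y = complex_of_real ((cmod (cinner x y))^2)"
      by (metis complex_norm_square mult.commute)
    thus ?thesis using False by (simp add: c_def power2_eq_square field_simps)
  qed
  hence "Re (cinner x (c *\<^sub>C y)) = cmod (cinner x y)" by (simp add: cinner_scaleC_right)
  moreover have "\<bar>Re (cinner x (c *\<^sub>C y))\<bar> \<le> norm x * norm y"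
    using Re_cinner_le[of x "c *\<^sub>C y"] by (simp add: complex_normed_vector_class.norm_scaleC cm)
  ultimately show ?thesis by simp
qed



lemma compact_closure_sub:
  fixes A C :: "'b::metric_space set"
  assumes "compact C" "A \<subseteq> C" shows "compact (closure A)"
proof -
  have "closure A \<subseteq> C" using assms by (simp add: closure_minimal compact_imp_closed)
  hence "closure A = C \<inter> closure A" by blast
  thus ?thesis using assms(1) compact_Int_closed[of C "closure A"] by simp
qed

lemma KopD:
  assumes "T \<in> Kop"
  shows "T (x + y) = T x + T y" "T (c *\<^sub>C x) = c *\<^sub>C T x"
    "compact (closure (T ` cball 0 1))"
  using assms unfolding Kop_def compact_op_def clinear_map_def by auto

lemma KopI:
  assumes "\<And>x y. T (x + y) = T x + T y" "\<And>c x. T (c *\<^sub>C x) = c *\<^sub>C T x"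
    "compact (closure (T ` cball 0 1))"
  shows "T \<in> Kop"
  using assms unfolding Kop_def compact_op_def clinear_map_def by auto

lemma Kop_scaleR: "T \<in> Kop \<Longrightarrow> T (r *\<^sub>R x) = r *\<^sub>R T x"
  using KopD(2)[of T "complex_of_real r" x] by (simp add: scaleR_scaleC)

lemma Kop_bounded_ball:
  assumes "T \<in> Kop" obtains B where "B > 0" "\<And>v. norm v \<le> 1 \<Longrightarrow> norm (T v) \<le> B"
proof -
  have "bounded (closure (T ` cball 0 1))" using KopD(3)[OF assms] compact_imp_bounded by blast
  hence "bounded (T ` cball 0 1)" using bounded_subset closure_subset by blast
  then obtain B where B: "\<forall>y\<in>T ` cball 0 1. norm y \<le> B" unfolding bounded_iff by blast
  show ?thesis
    apply (rule that[of "abs B + 1"]) using B by force+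
qed

lemma Kop_bl: assumes "T \<in> Kop" shows "bounded_linear T"
proof -
  obtain B where B: "B > 0" "\<And>v. norm v \<le> 1 \<Longrightarrow> norm (T v) \<le> B" using Kop_bounded_ball assms by blast
  show ?thesis
  proof (rule bounded_linear_intro[where K=B])
    show "T (x + y) = T x + T y" for x y using KopD(1)[OF assms] .
    show "T (r *\<^sub>R x) = r *\<^sub>R T x" for r x using Kop_scaleR[OF assms] .
    show "norm (T x) \<le> norm x * B" for x
    proof (cases "x = 0")
      case True then show ?thesis using Kop_scaleR[OF assms, of 0 0] by simp
    next
      case False
      have "T x = norm x *\<^sub>R T ((1/norm x) *\<^sub>R x)" using False Kop_scaleR[OF assms] by simp
      moreover have "norm (T ((1/norm x) *\<^sub>R x)) \<le> B" using B(2) False by simp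
      moreover have "norm x * norm (T ((1/norm x) *\<^sub>R x)) \<le> norm x * B"
        using calculation(2) by (rule mult_left_mono) simp
      ultimately show ?thesis by (simp add: mult.commute)
    qed
  qed
qed

lemma Kop_onorm: "T \<in> Kop \<Longrightarrow> norm (T x) \<le> onorm T * norm x"
  using onorm Kop_bl by blast

lemma Kop_zero: "T \<in> Kop \<Longrightarrow> T 0 = 0"
  using Kop_scaleR[of T 0 0] by simp

lemma Kop_diff: "T \<in> Kop \<Longrightarrow> T (x - y) = T x - T y"
proof -
  assume T: "T \<in> Kop"
  have "T (x + (-1) *\<^sub>R y) = T x + (-1) *\<^sub>R T y" by (simp only: KopD(1)[OF T] Kop_scaleR[OF T])
  thus ?thesis by simp
qed

lemma scaleC_bl: "bounded_linear (\<lambda>v::'a::complex_normed_vector. c *\<^sub>C v)"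
proof (rule bounded_linear_intro[where K="cmod c"])
  show "c *\<^sub>C (x + y) = c *\<^sub>C x + c *\<^sub>C y" for x y :: 'a by (rule scaleC_add_right)
  show "c *\<^sub>C (r *\<^sub>R x) = r *\<^sub>R (c *\<^sub>C x)" for r and x :: 'a
    by (simp add: scaleR_scaleC scaleC_scaleC mult.commute)
  show "norm (c *\<^sub>C x) \<le> norm x * cmod c" for x :: 'a
    by (simp add: complex_normed_vector_class.norm_scaleC mult.commute)
qed

lemma Kop_opadd: assumes "S \<in> Kop" "T \<in> Kop" shows "opadd S T \<in> Kop"
proof (rule KopI)
  show "opadd S T (x + y) = opadd S T x + opadd S T y" for x y
    using KopD(1)[OF assms(1)] KopD(1)[OF assms(2)] by (simp add: opadd_def algebra_simps)
  show "opadd S T (c *\<^sub>C x) = c *\<^sub>C opadd S T x" for c x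
    using KopD(2)[OF assms(1)] KopD(2)[OF assms(2)] by (simp add: opadd_def scaleC_add_right)
  have "opadd S T ` cball 0 1 \<subseteq> {a + b |a b. a \<in> closure (S ` cball 0 1) \<and> b \<in> closure (T ` cball 0 1)}"
  proof
    fix y assume "y \<in> opadd S T ` cball 0 1"
    then obtain v where v: "v \<in> cball 0 1" "y = S v + T v" by (auto simp: opadd_def)
    have 1: "S v \<in> closure (S ` cball 0 1)" "T v \<in> closure (T ` cball 0 1)"
      using v(1) closure_subset by (meson image_eqI subsetD)+
    show "y \<in> {a + b |a b. a \<in> closure (S ` cball 0 1) \<and> b \<in> closure (T ` cball 0 1)}"
      unfolding v(2) using 1 by (intro CollectI exI[of _ "S v"] exI[of _ "T v"] conjI refl)
  qed
  moreover have "compact {a + b |a b. a \<in> closure (S ` cball 0 1) \<and> b \<in> closure (T ` cball 0 1)}"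
    by (rule compact_sums[OF KopD(3)[OF assms(1)] KopD(3)[OF assms(2)]])
  ultimately show "compact (closure (opadd S T ` cball 0 1))"
    using compact_closure_sub by blast
qed

lemma Kop_opscale: assumes "T \<in> Kop" shows "opscale c T \<in> Kop"
proof (rule KopI)
  show "opscale c T (x + y) = opscale c T x + opscale c T y" for x y
    using KopD(1)[OF assms(1)] by (simp add: opscale_def scaleC_add_right)
  show "opscale c T (d *\<^sub>C x) = d *\<^sub>C opscale c T x" for d x
    using KopD(2)[OF assms(1)] by (simp add: opscale_def scaleC_scaleC mult.commute)
  have "compact ((\<lambda>v. c *\<^sub>C v) ` closure (T ` cball 0 1))"
    using compact_continuous_image[OF _ KopD(3)[OF assms]] linear_continuous_on[OF scaleC_bl] by blast
  moreover have "opscale c T ` cball 0 1 \<subseteq> (\<lambda>v. c *\<^sub>C v) ` closure (T ` cball 0 1)"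
  proof
    fix y assume "y \<in> opscale c T ` cball 0 1"
    then obtain v where v: "v \<in> cball 0 1" "y = c *\<^sub>C T v" by (auto simp: opscale_def)
    have "T v \<in> closure (T ` cball 0 1)" using v(1) closure_subset by (meson image_eqI subsetD)
    thus "y \<in> (\<lambda>v. c *\<^sub>C v) ` closure (T ` cball 0 1)" using v(2) by (intro rev_image_eqI) auto
  qed
  ultimately show "compact (closure (opscale c T ` cball 0 1))" using compact_closure_sub by blast
qed

lemma Kop_comp: assumes "S \<in> Kop" "T \<in> Kop" shows "S \<circ> T \<in> Kop"
proof (rule KopI)
  show "(S \<circ> T) (x + y) = (S \<circ> T) x + (S \<circ> T) y" for x y
    using KopD(1)[OF assms(1)] KopD(1)[OF assms(2)] by simp
  show "(S \<circ> T) (c *\<^sub>C x) = c *\<^sub>C (S \<circ> T) x" for c x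
    using KopD(2)[OF assms(1)] KopD(2)[OF assms(2)] by simp
  obtain B where B: "B > 0" "\<And>v. norm v \<le> 1 \<Longrightarrow> norm (T v) \<le> B" using Kop_bounded_ball assms(2) by blast
  have "compact ((\<lambda>v. B *\<^sub>R v) ` closure (S ` cball 0 1))"
    using compact_scaling[OF KopD(3)[OF assms(1)]] by blast
  moreover have "(S \<circ> T) ` cball 0 1 \<subseteq> (\<lambda>v. B *\<^sub>R v) ` closure (S ` cball 0 1)"
  proof
    fix y assume "y \<in> (S \<circ> T) ` cball 0 1"
    then obtain v where v: "norm v \<le> 1" "y = S (T v)" by auto
    have "S (T v) = B *\<^sub>R S ((1/B) *\<^sub>R T v)" using Kop_scaleR[OF assms(1)] B(1) by simp
    moreover have "(1/B) *\<^sub>R T v \<in> cball 0 1" using B v by (simp add: field_simps)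
    moreover have "S ((1/B) *\<^sub>R T v) \<in> closure (S ` cball 0 1)"
      using calculation(2) closure_subset by (meson image_eqI subsetD)
    ultimately show "y \<in> (\<lambda>v. B *\<^sub>R v) ` closure (S ` cball 0 1)" using v(2) by (intro rev_image_eqI) auto
  qed
  ultimately show "compact (closure ((S \<circ> T) ` cball 0 1))" using compact_closure_sub by blast
qed

lemma Kop_diff_op: assumes "S \<in> Kop" "T \<in> Kop" shows "(\<lambda>v. S v - T v) \<in> Kop"
proof -
  have "(\<lambda>v. S v - T v) = opadd S (opscale (-1) T)"
    by (auto simp: opadd_def opscale_def scaleC_minus_left scaleC_one)
  thus ?thesis using Kop_opadd[OF assms(1) Kop_opscale[OF assms(2)]] by simp
qed

definition rk1 :: "'a::chilbert_space \<Rightarrow> 'a \<Rightarrow> 'a" where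
  "rk1 e = (\<lambda>v. cinner e v *\<^sub>C e)"

lemma rk1_Kop: "rk1 e \<in> Kop"
proof (rule KopI)
  show "rk1 e (x + y) = rk1 e x + rk1 e y" for x y by (simp add: rk1_def cinner_add_right scaleC_add_left)
  show "rk1 e (c *\<^sub>C x) = c *\<^sub>C rk1 e x" for c x by (simp add: rk1_def cinner_scaleC_right scaleC_scaleC)
  have "continuous_on UNIV (\<lambda>c::complex. c *\<^sub>C e)"
  proof -
    have "bounded_linear (\<lambda>c::complex. c *\<^sub>C e)"
    proof (rule bounded_linear_intro[where K="norm e"])
      show "(x + y) *\<^sub>C e = x *\<^sub>C e + y *\<^sub>C e" for x y by (rule scaleC_add_left)
      show "(r *\<^sub>R x) *\<^sub>C e = r *\<^sub>R (x *\<^sub>C e)" for r x by (simp add: scaleR_scaleC scaleC_scaleC scaleR_conv_of_real)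
      show "norm (x *\<^sub>C e) \<le> norm x * norm e" for x by (simp add: complex_normed_vector_class.norm_scaleC)
    qed
    thus ?thesis using linear_continuous_on by blast
  qed
  hence "compact ((\<lambda>c. c *\<^sub>C e) ` cball 0 (norm e))"
    by (rule compact_continuous_image[OF continuous_on_subset[OF _ subset_UNIV] compact_cball])
  moreover have "rk1 e ` cball 0 1 \<subseteq> (\<lambda>c. c *\<^sub>C e) ` cball 0 (norm e)"
  proof
    fix y assume "y \<in> rk1 e ` cball 0 1"
    then obtain v where v: "norm v \<le> 1" "y = cinner e v *\<^sub>C e" by (auto simp: rk1_def)
    have "cmod (cinner e v) \<le> norm e"
    proof -
      have "norm e * norm v \<le> norm e * 1" using v(1) by (intro mult_left_mono) auto
      thus ?thesis using cauchy_schwarz[of e v] by simp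
    qed
    thus "y \<in> (\<lambda>c. c *\<^sub>C e) ` cball 0 (norm e)" using v(2) by (intro rev_image_eqI) auto
  qed
  ultimately show "compact (closure (rk1 e ` cball 0 1))" using compact_closure_sub by blast
qed



lemma cinner_ext: assumes "\<And>x. cinner x z = cinner x z'" shows "z = z'"
proof -
  have "cinner (z - z') (z - z') = 0"
    using assms[of "z - z'"] by (simp add: cinner_diff_right)
  thus ?thesis by (simp add: cinner_eq_zero_iff)
qed

lemma adj_eqI: assumes "\<And>x y. cinner (S x) y = cinner x (G y)" shows "adj S = G"
  unfolding adj_def
proof
  fix y
  show "(THE z. \<forall>x. cinner (S x) y = cinner x z) = G y"
  proof (rule the_equality)
    show "\<forall>x. cinner (S x) y = cinner x (G y)" using assms by blast
    show "\<And>z. \<forall>x. cinner (S x) y = cinner x z \<Longrightarrow> z = G y"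
      using assms cinner_ext by metis
  qed
qed

lemma parallelogram: fixes a b :: "'a::complex_inner" shows "(norm (a - b))\<^sup>2 + (norm (a + b))\<^sup>2 = 2 * (norm a)\<^sup>2 + 2 * (norm b)\<^sup>2"
  by (simp add: norm_add_sq norm_diff_sq)

lemma riesz:
  fixes g :: "'a::chilbert_space \<Rightarrow> complex"
  assumes add: "\<And>x y. g (x + y) = g x + g y" and sc: "\<And>c x. g (c *\<^sub>C x) = c * g x"
    and bd: "\<And>x. cmod (g x) \<le> C * norm x"
  shows "\<exists>z. \<forall>x. g x = cinner z x"
proof (cases "\<forall>x. g x = 0")
  case True then show ?thesis by (intro exI[of _ 0]) simp
next
  case False
  then obtain u where gu: "g u \<noteq> 0" by blast
  have g0: "g 0 = 0" using sc[of 0 0] by simp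
  have gdiff: "g (x - y) = g x - g y" for x y
  proof -
    have "g (x - y) + g y = g x" using add[of "x - y" y] by simp
    thus ?thesis by (simp add: algebra_simps)
  qed
  define K where "K = {k. g k = 0}"
  have K0: "0 \<in> K" using g0 by (simp add: K_def)
  define d where "d = Inf ((\<lambda>k. norm (u - k)) ` K)"
  have bdd: "bdd_below ((\<lambda>k. norm (u - k)) ` K)" by (rule bdd_belowI[of _ 0]) auto
  have dle: "d \<le> norm (u - k)" if "k \<in> K" for k
    unfolding d_def using bdd that by (auto intro!: cInf_lower)
  have d0: "0 \<le> d" unfolding d_def using K0 by (intro cInf_greatest) auto
  have "\<exists>k. k \<in> K \<and> norm (u - k) < d + 1 / (real n + 1)" for n
  proof -
    have "Inf ((\<lambda>k. norm (u - k)) ` K) < d + 1 / (real n + 1)" unfolding d_def by simp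
    then obtain y where "y \<in> (\<lambda>k. norm (u - k)) ` K" "y < d + 1 / (real n + 1)"
      using cInf_less_iff[OF _ bdd] K0 by blast
    thus ?thesis by blast
  qed
  then obtain k where k: "\<And>n. k n \<in> K" "\<And>n. norm (u - k n) < d + 1 / (real n + 1)" by metis
  define e where "e n = 1 / (real n + 1)" for n
  have e: "0 < e n" "e n \<le> 1" for n by (auto simp: e_def)
  have kmn: "(norm (k m - k n))\<^sup>2 \<le> (4 * d + 2) * (e m + e n)" for m n
  proof -
    have mid: "(1/2) *\<^sub>R (k m + k n) \<in> K"
      using k(1)[of m] k(1)[of n] sc[of "complex_of_real (1/2)" "k m + k n"] add[of "k m" "k n"]
      by (simp add: K_def scaleR_scaleC)
    have "d \<le> norm (u - (1/2) *\<^sub>R (k m + k n))" by (rule dle[OF mid])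
    moreover have "(u - k m) + (u - k n) = 2 *\<^sub>R (u - (1/2) *\<^sub>R (k m + k n))"
      by (simp add: algebra_simps scaleR_2)
    ultimately have "2 * d \<le> norm ((u - k m) + (u - k n))" by simp
    hence A: "4 * d^2 \<le> (norm ((u - k m) + (u - k n)))\<^sup>2"
      using d0 by (metis (mono_tags) mult_nonneg_nonneg power2_eq_square power_mono zero_le_numeral four_x_squared)
    have B: "(norm (u - k m))\<^sup>2 \<le> (d + e m)^2" "(norm (u - k n))\<^sup>2 \<le> (d + e n)^2"
      using k(2)[of m] k(2)[of n] unfolding e_def by (auto intro!: power_mono)
    have "(norm (k m - k n))\<^sup>2 = (norm ((u - k n) - (u - k m)))\<^sup>2" by (simp add: norm_minus_commute)
    also have "\<dots> = 2 * (norm (u - k n))\<^sup>2 + 2 * (norm (u - k m))\<^sup>2 - (norm ((u - k n) + (u - k m)))\<^sup>2"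
      using parallelogram[of "u - k n" "u - k m"] by simp
    also have "\<dots> \<le> 2 * (d + e n)^2 + 2 * (d + e m)^2 - 4 * d^2"
      using A B by (simp add: add.commute)
    also have "\<dots> = 4 * d * (e m + e n) + 2 * (e m)^2 + 2 * (e n)^2" by (simp add: power2_eq_square algebra_simps)
    also have "\<dots> \<le> (4 * d + 2) * (e m + e n)"
    proof -
      have "(e m)^2 \<le> e m" "(e n)^2 \<le> e n" using e[of m] e[of n] by (auto simp: power2_eq_square mult_le_one intro: mult_left_le)
      thus ?thesis by (simp add: algebra_simps)
    qed
    finally show ?thesis .
  qed
  have "Cauchy k"
  proof (rule metric_CauchyI)
    fix \<epsilon> :: real assume "0 < \<epsilon>"
    obtain N :: nat where N: "(4 * d + 2) * 2 / \<epsilon>^2 < real N" using reals_Archimedean2 by blast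
    have "dist (k m) (k n) < \<epsilon>" if "m \<ge> N" "n \<ge> N" for m n
    proof -
      have em: "e m \<le> 1 / (real N + 1)" "e n \<le> 1 / (real N + 1)"
        using that by (auto simp: e_def intro!: divide_left_mono)
      have "(4 * d + 2) * (e m + e n) \<le> (4 * d + 2) * (2 / (real N + 1))"
        using em d0 by (intro mult_left_mono) auto
      also have "\<dots> < \<epsilon>^2"
      proof -
        have "(4 * d + 2) * 2 < \<epsilon>^2 * real N"
          using N \<open>0 < \<epsilon>\<close> by (simp add: field_simps)
        moreover have "\<epsilon>^2 * real N \<le> \<epsilon>^2 * (real N + 1)" by (intro mult_left_mono) auto
        ultimately have "(4 * d + 2) * 2 < \<epsilon>^2 * (real N + 1)" by linarith
        thus ?thesis by (simp add: field_simps)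
      qed
      finally have "(norm (k m - k n))\<^sup>2 < \<epsilon>^2" using kmn[of m n] by linarith
      hence "norm (k m - k n) < \<epsilon>" using \<open>0 < \<epsilon>\<close> by (simp add: power_less_imp_less_base)
      thus ?thesis by (simp add: dist_norm)
    qed
    thus "\<exists>M. \<forall>m\<ge>M. \<forall>n\<ge>M. dist (k m) (k n) < \<epsilon>" by blast
  qed
  then obtain k0 where k0: "k \<longlonglongrightarrow> k0" using Cauchy_convergent_iff convergent_def by blast
  have "g k0 = 0"
  proof -
    have "(\<lambda>n. C * norm (k n - k0)) \<longlonglongrightarrow> C * 0"
      using k0 by (intro tendsto_mult tendsto_const) (simp add: tendsto_norm_zero_iff LIM_zero_iff)
    moreover have "cmod (g k0) \<le> C * norm (k n - k0)" for n
    proof -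
      have "g (k n - k0) = - g k0" using gdiff[of "k n" k0] k(1)[of n] by (simp add: K_def)
      thus ?thesis using bd[of "k n - k0"] by simp
    qed
    ultimately have "cmod (g k0) \<le> C * 0"
      by (intro tendsto_le[OF _ _ tendsto_const]) auto
    thus ?thesis by simp
  qed
  hence k0K: "k0 \<in> K" by (simp add: K_def)
  have "norm (u - k0) \<le> d"
  proof -
    have "(\<lambda>n. norm (u - k n)) \<longlonglongrightarrow> norm (u - k0)" using k0 by (intro tendsto_intros)
    moreover have "(\<lambda>n. d + e n) \<longlonglongrightarrow> d + 0"
    proof -
      have "(\<lambda>n. 1 / (real n + 1)) \<longlonglongrightarrow> 0"
        using LIMSEQ_inverse_real_of_nat by (simp add: inverse_eq_divide add.commute)
      thus ?thesis unfolding e_def by (intro tendsto_add tendsto_const)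
    qed
    ultimately have "norm (u - k0) \<le> d + 0"
      using k(2) unfolding e_def by (intro tendsto_le[OF _ _ \<open>(\<lambda>n. norm (u - k n)) \<longlonglongrightarrow> norm (u - k0)\<close>]) (auto intro: less_imp_le always_eventually)
    thus ?thesis by simp
  qed
  define w where "w = u - k0"
  have gw: "g w = g u" using gdiff[of u k0] \<open>g k0 = 0\<close> by (simp add: w_def)
  have wmin: "norm w \<le> norm (w - t)" if "t \<in> K" for t
  proof -
    have "k0 + t \<in> K" using that k0K add by (simp add: K_def)
    hence "d \<le> norm (u - (k0 + t))" by (rule dle)
    moreover have "u - (k0 + t) = w - t" by (simp add: w_def algebra_simps)
    ultimately show ?thesis using \<open>norm (u - k0) \<le> d\<close> by (simp add: w_def)
  qed
  have orth: "cinner w t = 0" if "t \<in> K" for t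
  proof (rule ccontr)
    assume ne: "cinner w t \<noteq> 0"
    define q where "q = (cmod (cinner w t))^2"
    have q: "q > 0" using ne by (simp add: q_def)
    define r where "r = 1 / ((norm t)^2 + 1)"
    have pos: "(norm t)^2 + 1 > 0" by (simp add: add_nonneg_pos)
    have r: "r > 0" "r * (norm t)^2 < 1" using pos by (auto simp: r_def field_simps)
    define s where "s = complex_of_real r * cinner t w"
    have "s *\<^sub>C t \<in> K" using that sc by (simp add: K_def)
    hence "norm w \<le> norm (w - s *\<^sub>C t)" by (rule wmin)
    hence "(norm w)^2 \<le> (norm (w - s *\<^sub>C t))^2" by (simp add: power_mono)
    also have "\<dots> = (norm w)^2 - 2 * Re (cinner w (s *\<^sub>C t)) + (norm (s *\<^sub>C t))^2"
      by (rule norm_diff_sq)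
    also have "Re (cinner w (s *\<^sub>C t)) = r * q"
    proof -
      have "cinner t w = cnj (cinner w t)" by (rule cinner_commute)
      hence "cinner w (s *\<^sub>C t) = complex_of_real r * (cnj (cinner w t) * cinner w t)"
        by (simp add: cinner_scaleC_right s_def)
      also have "cnj (cinner w t) * cinner w t = complex_of_real q"
        unfolding q_def by (metis complex_norm_square mult.commute)
      finally show ?thesis by simp
    qed
    also have "(norm (s *\<^sub>C t))^2 = r^2 * q * (norm t)^2"
    proof -
      have "cmod s = r * cmod (cinner w t)"
        using r(1) by (simp add: s_def norm_mult complex_mod_cnj cinner_commute[of t w])
      thus ?thesis by (simp add: complex_normed_vector_class.norm_scaleC power_mult_distrib q_def)
    qed
    finally have "0 \<le> r * q * (r * (norm t)^2 - 2)" by (simp add: algebra_simps power2_eq_square)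
    moreover have "r * q * (r * (norm t)^2 - 2) < 0"
      using r q by (intro mult_pos_neg) auto
    ultimately show False by simp
  qed
  have wne: "w \<noteq> 0" using gw gu g0 by auto
  have ww: "cinner w w \<noteq> 0" using wne by (simp add: cinner_eq_zero_iff)
  show ?thesis
  proof (intro exI allI)
    fix x
    define t where "t = x - (g x / g w) *\<^sub>C w"
    have "g t = 0" using gu gw by (simp add: t_def gdiff sc)
    hence "cinner w t = 0" using orth by (simp add: K_def)
    hence wx: "cinner w x = (g x / g w) * cinner w w"
      by (simp add: t_def cinner_diff_right cinner_scaleC_right)
    have "cinner (cnj (g w / cinner w w) *\<^sub>C w) x = (g w / cinner w w) * cinner w x"
      by (simp add: cinner_scaleC_left)
    also have "\<dots> = g x" using wx ww gu gw by (simp add: field_simps)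
    finally show "g x = cinner (cnj (g w / cinner w w) *\<^sub>C w) x" by simp
  qed
qed



lemma adj_exists: fixes T :: "'a::chilbert_space \<Rightarrow> 'a" assumes T: "T \<in> Kop" shows "\<exists>G. \<forall>x y. cinner (T x) y = cinner x (G y)"
proof -
  have "\<exists>z. \<forall>x. cinner (T x) y = cinner x z" for y
  proof -
    have "\<exists>z. \<forall>x. cinner y (T x) = cinner z x"
    proof (rule riesz)
      show "cinner y (T (x + x')) = cinner y (T x) + cinner y (T x')" for x x'
        by (simp add: KopD(1)[OF T] cinner_add_right)
      show "cinner y (T (c *\<^sub>C x)) = c * cinner y (T x)" for c x
        by (simp add: KopD(2)[OF T] cinner_scaleC_right)
      show "cmod (cinner y (T x)) \<le> (norm y * onorm T) * norm x" for x
      proof -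
        have "cmod (cinner y (T x)) \<le> norm y * norm (T x)" by (rule cauchy_schwarz)
        also have "\<dots> \<le> norm y * (onorm T * norm x)" by (intro mult_left_mono Kop_onorm[OF T]) auto
        finally show ?thesis by (simp add: mult.assoc)
      qed
    qed
    then obtain z where z: "\<forall>x. cinner y (T x) = cinner z x" by blast
    have "cinner (T x) y = cinner x z" for x using z cinner_commute[of "T x" y] cinner_commute[of x z] by simp
    thus ?thesis by blast
  qed
  thus ?thesis by metis
qed

lemma adj_prop: fixes T :: "'a::chilbert_space \<Rightarrow> 'a" assumes T: "T \<in> Kop" shows "cinner (T x) y = cinner x (adj T y)"
proof -
  obtain G where G: "\<forall>x y. cinner (T x) y = cinner x (G y)" using adj_exists[OF T] by blast
  hence "adj T = G" by (intro adj_eqI) blast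
  thus ?thesis using G by simp
qed

lemma adj_prop2: fixes T :: "'a::chilbert_space \<Rightarrow> 'a" assumes T: "T \<in> Kop" shows "cinner (adj T y) x = cinner y (T x)"
  using adj_prop[OF T, of x y] cinner_commute[of "adj T y" x] cinner_commute[of y "T x"] by simp

lemma adj_adj: fixes T :: "'a::chilbert_space \<Rightarrow> 'a" assumes T: "T \<in> Kop" shows "adj (adj T) = T"
  by (rule adj_eqI) (rule adj_prop2[OF T])

lemma adj_add: fixes T :: "'a::chilbert_space \<Rightarrow> 'a" assumes T: "T \<in> Kop" shows "adj T (y + y') = adj T y + adj T y'"
  by (rule cinner_ext) (simp add: adj_prop[OF T, symmetric] cinner_add_right)

lemma adj_scaleC: fixes T :: "'a::chilbert_space \<Rightarrow> 'a" assumes T: "T \<in> Kop" shows "adj T (c *\<^sub>C y) = c *\<^sub>C adj T y"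
  by (rule cinner_ext) (simp add: adj_prop[OF T, symmetric] cinner_scaleC_right)

lemma adj_zero: fixes T :: "'a::chilbert_space \<Rightarrow> 'a" assumes T: "T \<in> Kop" shows "adj T 0 = 0"
  using adj_scaleC[OF T, of 0 0] by simp

lemma adj_scaleR: fixes T :: "'a::chilbert_space \<Rightarrow> 'a" assumes T: "T \<in> Kop" shows "adj T (r *\<^sub>R y) = r *\<^sub>R adj T y"
  using adj_scaleC[OF T, of "complex_of_real r" y] by (simp add: scaleR_scaleC)

lemma adj_diff: fixes T :: "'a::chilbert_space \<Rightarrow> 'a" assumes T: "T \<in> Kop" shows "adj T (y - y') = adj T y - adj T y'"
proof -
  have "adj T (y + (-1) *\<^sub>R y') = adj T y + (-1) *\<^sub>R adj T y'" by (simp only: adj_add[OF T] adj_scaleR[OF T])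
  thus ?thesis by simp
qed

lemma adj_bound: fixes T :: "'a::chilbert_space \<Rightarrow> 'a" assumes T: "T \<in> Kop" shows "norm (adj T y) \<le> onorm T * norm y"
proof (cases "adj T y = 0")
  case True then show ?thesis using onorm_pos_le[OF Kop_bl[OF T]] by simp
next
  case False
  have "(norm (adj T y))\<^sup>2 = Re (cinner (adj T y) (adj T y))" by (simp add: cinner_self_real)
  also have "\<dots> = Re (cinner (T (adj T y)) y)" by (simp add: adj_prop[OF T])
  also have "\<dots> \<le> cmod (cinner (T (adj T y)) y)" by (rule complex_Re_le_cmod)
  also have "\<dots> \<le> norm (T (adj T y)) * norm y" by (rule cauchy_schwarz)
  also have "\<dots> \<le> onorm T * norm (adj T y) * norm y" by (intro mult_right_mono Kop_onorm[OF T]) auto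
  finally have "norm (adj T y) * norm (adj T y) \<le> (onorm T * norm y) * norm (adj T y)"
    by (simp add: power2_eq_square mult_ac)
  thus ?thesis using False by simp
qed

lemma compact_closure_seqI:
  fixes S :: "'b::real_normed_vector set"
  assumes seq: "\<And>f::nat\<Rightarrow>'b. (\<forall>n. f n \<in> S) \<Longrightarrow> \<exists>r l. strict_mono r \<and> (f \<circ> r) \<longlonglongrightarrow> l"
  shows "compact (closure S)"
proof -
  have "seq_compact (closure S)" unfolding seq_compact_def
  proof (intro allI impI)
    fix f :: "nat \<Rightarrow> 'b" assume f: "\<forall>n. f n \<in> closure S"
    have "\<forall>n. \<exists>y. y \<in> S \<and> dist y (f n) < 1 / (real n + 1)"
    proof
      fix n
      have "f n \<in> closure S" using f by blast
      hence "\<exists>y\<in>S. dist y (f n) < 1 / (real n + 1)" unfolding closure_approachable by simp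
      thus "\<exists>y. y \<in> S \<and> dist y (f n) < 1 / (real n + 1)" by blast
    qed
    from choice[OF this] obtain g where g0: "\<forall>n. g n \<in> S \<and> dist (g n) (f n) < 1 / (real n + 1)" by blast
    have g: "\<And>n. g n \<in> S" "\<And>n. dist (g n) (f n) < 1 / (real n + 1)" using g0 by auto
    have "\<exists>r l. strict_mono r \<and> (g \<circ> r) \<longlonglongrightarrow> l" by (rule seq) (simp add: g(1))
    then obtain r l where r: "strict_mono r" "(g \<circ> r) \<longlonglongrightarrow> l" by blast
    have dlim: "((\<lambda>n. g (r n) - f (r n))) \<longlonglongrightarrow> 0"
    proof (rule Lim_null_comparison)
      show "\<forall>\<^sub>F n in sequentially. norm (g (r n) - f (r n)) \<le> 1 / (real n + 1)"
      proof (intro always_eventually allI)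
        fix n
        have "real n \<le> real (r n)" using seq_suble[OF r(1)] by simp
        hence "1 / (real (r n) + 1) \<le> 1 / (real n + 1)" by (intro divide_left_mono) auto
        thus "norm (g (r n) - f (r n)) \<le> 1 / (real n + 1)" using g(2)[of "r n"] by (simp add: dist_norm)
      qed
      show "(\<lambda>n. 1 / (real n + 1)) \<longlonglongrightarrow> 0"
        using LIMSEQ_inverse_real_of_nat by (simp add: inverse_eq_divide add.commute)
    qed
    have "(\<lambda>n. f (r n)) \<longlonglongrightarrow> l" by (rule Lim_transform2[OF r(2)[unfolded o_def] dlim])
    hence "(f \<circ> r) \<longlonglongrightarrow> l" by (simp add: o_def)
    moreover have "l \<in> closure S"
    proof -
      have "(\<forall>n. (g \<circ> r) n \<in> S) \<and> (g \<circ> r) \<longlonglongrightarrow> l" using g(1) r(2) by simp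
      thus ?thesis unfolding closure_sequential by blast
    qed
    ultimately show "\<exists>l\<in>closure S. \<exists>r. strict_mono r \<and> (f \<circ> r) \<longlonglongrightarrow> l" using r(1) by blast
  qed
  thus ?thesis by (simp add: compact_eq_seq_compact_metric)
qed



lemma le_lim0:
  fixes v :: "nat \<Rightarrow> 'b::real_normed_vector"
  assumes "v \<longlonglongrightarrow> w" "\<And>n. a \<le> C * norm (v n - w)" shows "a \<le> 0"
proof -
  have "(\<lambda>n. C * norm (v n - w)) \<longlonglongrightarrow> C * 0"
    using assms(1) by (intro tendsto_mult tendsto_const) (simp add: tendsto_norm_zero_iff LIM_zero_iff)
  hence "a \<le> C * 0" using assms(2) by (intro tendsto_le[OF _ _ tendsto_const]) (auto intro: always_eventually)
  thus ?thesis by simp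
qed

lemma lim_line:
  fixes v :: "nat \<Rightarrow> 'a::chilbert_space"
  assumes v: "\<And>n. \<exists>\<mu>. v n = \<mu> *\<^sub>C e" and lim: "v \<longlonglongrightarrow> w"
  shows "\<exists>\<mu>. w = \<mu> *\<^sub>C e"
proof (cases "e = 0")
  case True
  hence "v = (\<lambda>n. 0)" using v by auto
  hence "w = 0" using lim LIMSEQ_unique tendsto_const by metis
  thus ?thesis using True by simp
next
  case False
  define \<mu> where "\<mu> = cinner e w / cinner e e"
  have ee: "cinner e e \<noteq> 0" using False by (simp add: cinner_eq_zero_iff)
  have ee2: "cinner e e = complex_of_real ((norm e)^2)" by (rule cinner_self_real)
  have ne: "norm e > 0" using False by simp
  have "norm (w - \<mu> *\<^sub>C e) \<le> 0"
  proof (rule le_lim0[OF lim])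
    fix n
    obtain \<mu>' where m: "v n = \<mu>' *\<^sub>C e" using v by blast
    have "cinner e (v n) = \<mu>' * cinner e e" using m by (simp add: cinner_scaleC_right)
    hence "\<mu>' - \<mu> = cinner e (v n - w) / cinner e e"
      using ee by (simp add: \<mu>_def cinner_diff_right field_simps)
    hence eqv: "v n - \<mu> *\<^sub>C e = (cinner e (v n - w) / cinner e e) *\<^sub>C e"
      using m scaleC_diff_left[of \<mu>' \<mu> e] by simp
    hence "norm (v n - \<mu> *\<^sub>C e) = cmod (cinner e (v n - w)) / (norm e)^2 * norm e"
    proof -
      have "cmod (cinner e e) = (norm e)^2" unfolding ee2 by (simp only: norm_of_real) simp
      thus ?thesis unfolding eqv by (simp add: complex_normed_vector_class.norm_scaleC norm_divide)
    qed
    also have "\<dots> \<le> (norm e * norm (v n - w)) / (norm e)^2 * norm e"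
      using cauchy_schwarz[of e "v n - w"] by (intro mult_right_mono divide_right_mono) auto
    also have "\<dots> = norm (v n - w)" using ne by (simp add: power2_eq_square)
    finally have "norm (v n - \<mu> *\<^sub>C e) \<le> norm (v n - w)" .
    moreover have "norm (w - \<mu> *\<^sub>C e) \<le> norm (w - v n) + norm (v n - \<mu> *\<^sub>C e)"
      using norm_triangle_ineq[of "w - v n" "v n - \<mu> *\<^sub>C e"] by simp
    ultimately show "norm (w - \<mu> *\<^sub>C e) \<le> 2 * norm (v n - w)" by (simp add: norm_minus_commute)
  qed
  hence "w = \<mu> *\<^sub>C e" by simp
  thus ?thesis by blast
qed

lemma adj_Kop: fixes T :: "'a::chilbert_space \<Rightarrow> 'a" assumes T: "T \<in> Kop" shows "adj T \<in> Kop"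
proof (rule KopI)
  show "adj T (x + y) = adj T x + adj T y" for x y by (rule adj_add[OF T])
  show "adj T (c *\<^sub>C x) = c *\<^sub>C adj T x" for c x by (rule adj_scaleC[OF T])
  show "compact (closure (adj T ` cball 0 1))"
  proof (rule compact_closure_seqI)
    fix f :: "nat \<Rightarrow> 'a" assume f: "\<forall>n. f n \<in> adj T ` cball 0 1"
    have "\<forall>n. \<exists>y. y \<in> cball 0 1 \<and> f n = adj T y" using f by blast
    from choice[OF this] obtain y where y0: "\<forall>n. y n \<in> cball 0 1 \<and> f n = adj T (y n)" by blast
    have y: "\<And>n. norm (y n) \<le> 1" "\<And>n. f n = adj T (y n)" using y0 by auto
    define R where "R = onorm T + 1"
    have R: "R > 0" using onorm_pos_le[OF Kop_bl[OF T]] by (simp add: R_def)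
    have fb: "norm (f n) \<le> R" for n
    proof -
      have "norm (f n) \<le> onorm T * norm (y n)" using adj_bound[OF T] y(2) by simp
      also have "\<dots> \<le> onorm T * 1" using y(1) onorm_pos_le[OF Kop_bl[OF T]] by (intro mult_left_mono) auto
      finally show ?thesis by (simp add: R_def)
    qed
    define u where "u n = T ((1/R) *\<^sub>R f n)" for n
    have "u n \<in> closure (T ` cball 0 1)" for n
    proof -
      have "(1/R) *\<^sub>R f n \<in> cball 0 1" using fb[of n] R by (simp add: field_simps)
      thus ?thesis unfolding u_def using closure_subset by (meson image_eqI subsetD)
    qed
    then obtain l r where r: "strict_mono r" "(u \<circ> r) \<longlonglongrightarrow> l"
      using compact_imp_seq_compact[OF KopD(3)[OF T]] unfolding seq_compact_def by meson
    have Tf: "T (f n) = R *\<^sub>R u n" for n using R by (simp add: u_def Kop_scaleR[OF T])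
    have "(\<lambda>n. T (f (r n))) \<longlonglongrightarrow> R *\<^sub>R l"
      using r(2) unfolding Tf o_def by (intro tendsto_scaleR tendsto_const)
    hence CT: "Cauchy (\<lambda>n. T (f (r n)))" by (rule LIMSEQ_imp_Cauchy)
    have key: "(norm (f m - f n))^2 \<le> 2 * norm (T (f m) - T (f n))" for m n
    proof -
      have "f m - f n = adj T (y m - y n)" using y(2) adj_diff[OF T] by simp
      hence "(norm (f m - f n))^2 = Re (cinner (adj T (y m - y n)) (f m - f n))"
        by (simp add: cinner_self_real)
      also have "\<dots> = Re (cinner (y m - y n) (T (f m - f n)))" by (simp add: adj_prop2[OF T])
      also have "\<dots> \<le> cmod (cinner (y m - y n) (T (f m - f n)))" by (rule complex_Re_le_cmod)
      also have "\<dots> \<le> norm (y m - y n) * norm (T (f m - f n))" by (rule cauchy_schwarz)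
      also have "\<dots> \<le> 2 * norm (T (f m - f n))"
      proof (rule mult_right_mono)
        show "norm (y m - y n) \<le> 2" using norm_triangle_ineq4[of "y m" "y n"] y(1)[of m] y(1)[of n] by simp
      qed simp
      finally show ?thesis by (simp add: Kop_diff[OF T])
    qed
    have "Cauchy (f \<circ> r)"
    proof (rule metric_CauchyI)
      fix \<epsilon> :: real assume e: "0 < \<epsilon>"
      hence "0 < \<epsilon>^2 / 2" by simp
      then obtain N where N: "\<forall>m\<ge>N. \<forall>n\<ge>N. dist (T (f (r m))) (T (f (r n))) < \<epsilon>^2 / 2"
        using CT metric_CauchyD by blast
      have "dist ((f \<circ> r) m) ((f \<circ> r) n) < \<epsilon>" if "m \<ge> N" "n \<ge> N" for m n
      proof -
        have "(norm (f (r m) - f (r n)))^2 < \<epsilon>^2"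
        proof -
          have "norm (T (f (r m)) - T (f (r n))) * 2 < \<epsilon>^2" using N that by (simp add: dist_norm)
          thus ?thesis using key[of "r m" "r n"] by linarith
        qed
        hence "norm (f (r m) - f (r n)) < \<epsilon>" using e by (simp add: power_less_imp_less_base)
        thus ?thesis by (simp add: dist_norm)
      qed
      thus "\<exists>M. \<forall>m\<ge>M. \<forall>n\<ge>M. dist ((f \<circ> r) m) ((f \<circ> r) n) < \<epsilon>" by blast
    qed
    then obtain l' where "(f \<circ> r) \<longlonglongrightarrow> l'" using Cauchy_convergent_iff convergent_def by blast
    thus "\<exists>r l. strict_mono r \<and> (f \<circ> r) \<longlonglongrightarrow> l" using r(1) by blast
  qed
qed

lemma adj_opadd: fixes S T :: "'a::chilbert_space \<Rightarrow> 'a" assumes S: "S \<in> Kop" and T: "T \<in> Kop"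
  shows "adj (opadd S T) = opadd (adj S) (adj T)"
  by (rule adj_eqI) (simp add: opadd_def cinner_add_left cinner_add_right adj_prop[OF S] adj_prop[OF T])

lemma adj_opscale: fixes T :: "'a::chilbert_space \<Rightarrow> 'a" assumes T: "T \<in> Kop"
  shows "adj (opscale c T) = opscale (cnj c) (adj T)"
  by (rule adj_eqI) (simp add: opscale_def cinner_scaleC_left cinner_scaleC_right adj_prop[OF T])

lemma adj_comp: fixes S T :: "'a::chilbert_space \<Rightarrow> 'a" assumes S: "S \<in> Kop" and T: "T \<in> Kop"
  shows "adj (S \<circ> T) = adj T \<circ> adj S"
  by (rule adj_eqI) (simp add: adj_prop[OF S] adj_prop[OF T])

lemma adj_diffop: fixes S T :: "'a::chilbert_space \<Rightarrow> 'a" assumes S: "S \<in> Kop" and T: "T \<in> Kop"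
  shows "adj (\<lambda>v. S v - T v) = (\<lambda>v. adj S v - adj T v)"
  by (rule adj_eqI) (simp add: cinner_diff_left cinner_diff_right adj_prop[OF S] adj_prop[OF T])



lemma one_over_lim: "(\<lambda>n. 1 / (real n + 1)) \<longlonglongrightarrow> 0"
  using LIMSEQ_inverse_real_of_nat by (simp add: inverse_eq_divide add.commute)

lemma eig_dense:
  fixes x :: "'a::chilbert_space \<Rightarrow> 'a"
  assumes xK: "x \<in> Kop" and xsa: "adj x = x"
    and v: "\<forall>e. (\<exists>lam. x e = lam *\<^sub>C e) \<longrightarrow> cinner e v = 0"
  shows "v = 0"
proof (rule ccontr)
  assume vne: "v \<noteq> 0"
  have sa: "cinner (x a) b = cinner a (x b)" for a b using adj_prop[OF xK, of a b] xsa by simp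
  have xbl: "bounded_linear x" by (rule Kop_bl[OF xK])
  define M where "M = {u. \<forall>e. (\<exists>lam. x e = lam *\<^sub>C e) \<longrightarrow> cinner e u = 0}"
  have vM: "v \<in> M" using v by (simp add: M_def)
  have M0: "0 \<in> M" by (simp add: M_def)
  have Mx: "x u \<in> M" if "u \<in> M" for u
  proof -
    have "cinner e (x u) = 0" if "x e = lam *\<^sub>C e" for e lam
    proof -
      have "cinner e (x u) = cinner (x e) u" by (simp add: sa)
      also have "\<dots> = cnj lam * cinner e u" using that by (simp add: cinner_scaleC_left)
      finally show ?thesis using \<open>u \<in> M\<close> that by (auto simp: M_def)
    qed
    thus ?thesis by (auto simp: M_def)
  qed
  have MscR: "r *\<^sub>R u \<in> M" if "u \<in> M" for u r
    using that by (auto simp: M_def cinner_scaleR_right)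
  have Madd: "u + w \<in> M" if "u \<in> M" "w \<in> M" for u w
    using that by (auto simp: M_def cinner_add_right)
  have Mself: "e = 0" if "e \<in> M" "x e = lam *\<^sub>C e" for e lam
  proof -
    have "cinner e e = 0" using that by (auto simp: M_def)
    thus ?thesis by (simp add: cinner_eq_zero_iff)
  qed
  have Mclosed: "l \<in> M" if "\<And>n. s n \<in> M" "s \<longlonglongrightarrow> l" for s l
  proof -
    have "cinner e l = 0" if "x e = lam *\<^sub>C e" for e lam
    proof -
      have "cmod (cinner e l) \<le> 0"
      proof (rule le_lim0[OF \<open>s \<longlonglongrightarrow> l\<close>])
        fix n
        have "cinner e (s n) = 0" using \<open>\<And>n. s n \<in> M\<close> that by (auto simp: M_def)
        hence "cinner e l = - cinner e (s n - l)" by (simp add: cinner_diff_right)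
        hence "cmod (cinner e l) = cmod (cinner e (s n - l))" by simp
        also have "\<dots> \<le> norm e * norm (s n - l)" by (rule cauchy_schwarz)
        finally show "cmod (cinner e l) \<le> norm e * norm (s n - l)" .
      qed
      thus ?thesis by simp
    qed
    thus ?thesis by (auto simp: M_def)
  qed
  show False
  proof (cases "\<forall>u\<in>M. x u = 0")
    case True
    hence "x v = 0 *\<^sub>C v" using vM by simp
    thus False using Mself[OF vM] vne by blast
  next
    case False
    then obtain u0 where u0: "u0 \<in> M" "x u0 \<noteq> 0" by blast
    define S where "S = (\<lambda>u. norm (x u)) ` (M \<inter> cball 0 1)"
    define m where "m = Sup S"
    have Sne: "S \<noteq> {}" using M0 by (auto simp: S_def)
    have Sbdd: "bdd_above S"
    proof (rule bdd_aboveI[of _ "onorm x"])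
      fix y assume "y \<in> S"
      then obtain u where "norm u \<le> 1" "y = norm (x u)" by (auto simp: S_def)
      moreover have "norm (x u) \<le> onorm x * norm u" by (rule Kop_onorm[OF xK])
      moreover have "onorm x * norm u \<le> onorm x" using \<open>norm u \<le> 1\<close> onorm_pos_le[OF xbl] by (simp add: mult_left_le)
      ultimately show "y \<le> onorm x" by linarith
    qed
    have Sle: "norm (x u) \<le> m" if "u \<in> M" "norm u \<le> 1" for u
      unfolding m_def using that Sbdd by (intro cSup_upper) (auto simp: S_def)
    have bnd: "norm (x u) \<le> m * norm u" if "u \<in> M" for u
    proof (cases "u = 0")
      case True then show ?thesis by (simp add: Kop_zero[OF xK])
    next
      case False
      have "norm (x ((1/norm u) *\<^sub>R u)) \<le> m" using False that MscR by (intro Sle) auto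
      hence "norm (x u) / norm u \<le> m" using False by (simp add: Kop_scaleR[OF xK])
      thus ?thesis using False by (simp add: field_simps)
    qed
    have mpos: "m > 0"
    proof -
      have "u0 \<noteq> 0" using u0 Kop_zero[OF xK] by auto
      hence "0 < norm (x ((1/norm u0) *\<^sub>R u0))" using u0 by (simp add: Kop_scaleR[OF xK])
      also have "\<dots> \<le> m" using u0 MscR \<open>u0 \<noteq> 0\<close> by (intro Sle) auto
      finally show ?thesis .
    qed
    have "\<forall>n. \<exists>u. u \<in> M \<and> norm u \<le> 1 \<and> m - 1 / (real n + 1) < norm (x u)"
    proof
      fix n
      have "m - 1 / (real n + 1) < Sup S" unfolding m_def by simp
      then obtain y where "y \<in> S" "m - 1 / (real n + 1) < y" using less_cSup_iff[OF Sne Sbdd] by blast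
      thus "\<exists>u. u \<in> M \<and> norm u \<le> 1 \<and> m - 1 / (real n + 1) < norm (x u)" by (auto simp: S_def)
    qed
    from choice[OF this] obtain vs where vs0: "\<forall>n. vs n \<in> M \<and> norm (vs n) \<le> 1 \<and> m - 1 / (real n + 1) < norm (x (vs n))" by blast
    have vs: "\<And>n. vs n \<in> M" "\<And>n. norm (vs n) \<le> 1" "\<And>n. m - 1 / (real n + 1) < norm (x (vs n))"
      using vs0 by auto
    have xvs: "norm (x (vs n)) \<le> m" for n using Sle vs by blast
    define d where "d n = x (x (vs n)) - (m^2) *\<^sub>R vs n" for n
    have dsq: "(norm (d n))^2 \<le> 2 * m^3 * (1 / (real n + 1))" for n
    proof -
      define a where "a = norm (x (vs n))"
      have a0: "0 \<le> a" by (simp add: a_def)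
      have am: "a \<le> m" using xvs by (simp add: a_def)
      have am2: "m - 1 / (real n + 1) < a" using vs(3) by (simp add: a_def)
      have "(norm (d n))^2 = (norm (x (x (vs n))))^2 - 2 * Re (cinner (x (x (vs n))) ((m^2) *\<^sub>R vs n)) + (norm ((m^2) *\<^sub>R vs n))^2"
        unfolding d_def by (rule norm_diff_sq)
      also have "Re (cinner (x (x (vs n))) ((m^2) *\<^sub>R vs n)) = m^2 * a^2"
      proof -
        have "cinner (x (x (vs n))) (vs n) = cinner (x (vs n)) (x (vs n))" by (simp add: sa)
        thus ?thesis by (simp add: cinner_scaleR_right cinner_self_real a_def)
      qed
      also have "(norm ((m^2) *\<^sub>R vs n))^2 \<le> m^4"
      proof -
        have "norm ((m^2) *\<^sub>R vs n) \<le> m^2" using vs(2)[of n] by (simp add: mult_left_le)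
        hence "(norm ((m^2) *\<^sub>R vs n))^2 \<le> (m^2)^2" by (intro power_mono) auto
        thus ?thesis by simp
      qed
      also have "(norm (x (x (vs n))))^2 \<le> (m * a)^2"
      proof -
        have "norm (x (x (vs n))) \<le> m * a" using bnd[OF Mx[OF vs(1)[of n]]] by (simp add: a_def)
        thus ?thesis by (intro power_mono) auto
      qed
      finally have "(norm (d n))^2 \<le> m^2 * (m^2 - a^2)" by (simp add: algebra_simps power2_eq_square power4_eq_xxxx)
      also have "\<dots> \<le> m^2 * (2 * m * (1 / (real n + 1)))"
      proof (rule mult_left_mono)
        have "m^2 - a^2 = (m - a) * (m + a)" by (simp add: power2_eq_square algebra_simps)
        also have "\<dots> \<le> (1 / (real n + 1)) * (2 * m)"
          using am am2 a0 mpos by (intro mult_mono) auto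
        finally show "m^2 - a^2 \<le> 2 * m * (1 / (real n + 1))" by simp
      qed simp
      finally show ?thesis by (simp add: power3_eq_cube power2_eq_square mult_ac)
    qed
    have dlim: "d \<longlonglongrightarrow> 0"
    proof -
      have "(\<lambda>n. (norm (d n))^2) \<longlonglongrightarrow> 0"
      proof (rule Lim_null_comparison)
        show "\<forall>\<^sub>F n in sequentially. norm ((norm (d n))^2) \<le> 2 * m^3 * (1 / (real n + 1))"
          using dsq by (intro always_eventually allI) simp
        show "(\<lambda>n. 2 * m^3 * (1 / (real n + 1))) \<longlonglongrightarrow> 0"
          using tendsto_mult[OF tendsto_const one_over_lim, of "2 * m^3"] by simp
      qed
      hence "(\<lambda>n. sqrt ((norm (d n))^2)) \<longlonglongrightarrow> sqrt 0" by (rule tendsto_real_sqrt)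
      hence "(\<lambda>n. norm (d n)) \<longlonglongrightarrow> 0" by simp
      thus ?thesis by (simp add: tendsto_norm_zero_iff)
    qed
    have "x (vs n) \<in> closure (x ` cball 0 1)" for n
      using vs(2)[of n] closure_subset by (meson image_eqI mem_cball_0 subsetD)
    then obtain w0 r where r: "strict_mono r" "((\<lambda>n. x (vs n)) \<circ> r) \<longlonglongrightarrow> w0"
      using compact_imp_seq_compact[OF KopD(3)[OF xK]] unfolding seq_compact_def by meson
    have xr: "(\<lambda>n. x (vs (r n))) \<longlonglongrightarrow> w0" using r(2) by (simp add: o_def)
    have xxr: "(\<lambda>n. x (x (vs (r n)))) \<longlonglongrightarrow> x w0" by (rule bounded_linear.tendsto[OF xbl xr])
    have dr: "(\<lambda>n. d (r n)) \<longlonglongrightarrow> 0" using LIMSEQ_subseq_LIMSEQ[OF dlim r(1)] by (simp add: o_def)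
    define u where "u = (1 / m^2) *\<^sub>R x w0"
    have vr: "(\<lambda>n. vs (r n)) \<longlonglongrightarrow> u"
    proof -
      have "(\<lambda>n. (1 / m^2) *\<^sub>R (x (x (vs (r n))) - d (r n))) \<longlonglongrightarrow> (1 / m^2) *\<^sub>R (x w0 - 0)"
        by (intro tendsto_scaleR tendsto_const tendsto_diff xxr dr)
      moreover have "(1 / m^2) *\<^sub>R (x (x (vs (r n))) - d (r n)) = vs (r n)" for n
        using mpos by (simp add: d_def)
      ultimately show ?thesis by (simp add: u_def)
    qed
    have uM: "u \<in> M" using Mclosed[OF _ vr] vs(1) by blast
    have xu: "(\<lambda>n. x (vs (r n))) \<longlonglongrightarrow> x u" by (rule bounded_linear.tendsto[OF xbl vr])
    have xxu: "(\<lambda>n. x (x (vs (r n)))) \<longlonglongrightarrow> x (x u)" by (rule bounded_linear.tendsto[OF xbl xu])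
    have nxu: "norm (x u) = m"
    proof -
      have "(\<lambda>n. norm (x (vs (r n)))) \<longlonglongrightarrow> norm (x u)" by (rule tendsto_norm[OF xu])
      moreover have "(\<lambda>n. norm (x (vs (r n)))) \<longlonglongrightarrow> m"
      proof (rule tendsto_sandwich[of "\<lambda>n. m - 1 / (real n + 1)" _ _ "\<lambda>n. m"])
        show "\<forall>\<^sub>F n in sequentially. m - 1 / (real n + 1) \<le> norm (x (vs (r n)))"
        proof (intro always_eventually allI)
          fix n
          have "real n \<le> real (r n)" using seq_suble[OF r(1)] by simp
          hence "1 / (real (r n) + 1) \<le> 1 / (real n + 1)" by (intro divide_left_mono) auto
          thus "m - 1 / (real n + 1) \<le> norm (x (vs (r n)))" using vs(3)[of "r n"] by linarith
        qed
        show "\<forall>\<^sub>F n in sequentially. norm (x (vs (r n))) \<le> m" using xvs by (intro always_eventually allI) 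
        show "(\<lambda>n. m - 1 / (real n + 1)) \<longlonglongrightarrow> m" using tendsto_diff[OF tendsto_const one_over_lim, of m] by simp
        show "(\<lambda>n. m) \<longlonglongrightarrow> m" by simp
      qed
      ultimately show ?thesis using LIMSEQ_unique by blast
    qed
    have xxu2: "x (x u) = (m^2) *\<^sub>R u"
    proof -
      have "(\<lambda>n. (m^2) *\<^sub>R vs (r n) + d (r n)) \<longlonglongrightarrow> (m^2) *\<^sub>R u + 0"
        by (intro tendsto_add tendsto_scaleR tendsto_const vr dr)
      moreover have "(m^2) *\<^sub>R vs (r n) + d (r n) = x (x (vs (r n)))" for n by (simp add: d_def)
      ultimately have "(\<lambda>n. x (x (vs (r n)))) \<longlonglongrightarrow> (m^2) *\<^sub>R u" by simp
      thus ?thesis using xxu LIMSEQ_unique by blast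
    qed
    have une: "u \<noteq> 0" using nxu mpos Kop_zero[OF xK] by auto
    define e where "e = x u + m *\<^sub>R u"
    have eM: "e \<in> M" unfolding e_def by (intro Madd Mx MscR uM)
    have xe: "x e = complex_of_real m *\<^sub>C e"
    proof -
      have "x e = x (x u) + m *\<^sub>R x u" by (simp add: e_def KopD(1)[OF xK] Kop_scaleR[OF xK])
      also have "\<dots> = m *\<^sub>R e" by (simp add: xxu2 e_def power2_eq_square scaleR_add_right)
      finally show ?thesis by (simp add: scaleR_scaleC)
    qed
    have "e = 0" by (rule Mself[OF eM xe])
    hence "x u = - (m *\<^sub>R u)" by (simp add: e_def eq_neg_iff_add_eq_0)
    hence "x u = complex_of_real (- m) *\<^sub>C u" by (simp add: scaleC_minus_left scaleC_of_real)
    hence "u = 0" by (rule Mself[OF uM])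
    thus False using une by blast
  qed
qed



definition phi :: "'a::chilbert_space \<Rightarrow> 'a \<Rightarrow> ('a \<Rightarrow> 'a) \<Rightarrow> complex" where
  "phi u w S = cinner u (S w)"

lemma phi_dual: "dual_K (phi u w)"
  unfolding dual_K_def
proof (intro conjI ballI allI)
  show "phi u w (opadd a b) = phi u w a + phi u w b" for a b
    by (simp add: phi_def opadd_def cinner_add_right)
  show "phi u w (opscale c a) = c * phi u w a" for c a
    by (simp add: phi_def opscale_def cinner_scaleC_right)
  show "\<exists>C. \<forall>a\<in>Kop. cmod (phi u w a) \<le> C * onorm a"
  proof (intro exI ballI)
    fix a :: "'a \<Rightarrow> 'a" assume a: "a \<in> Kop"
    have "cmod (phi u w a) \<le> norm u * norm (a w)" unfolding phi_def by (rule cauchy_schwarz)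
    also have "\<dots> \<le> norm u * (onorm a * norm w)" by (intro mult_left_mono Kop_onorm[OF a]) auto
    finally show "cmod (phi u w a) \<le> (norm u * norm w) * onorm a" by (simp add: mult_ac)
  qed
qed

lemma w2l_D:
  assumes "weak_2_local_star_derivation \<Delta>" "a \<in> Kop" "b \<in> Kop"
  shows "\<exists>D. star_derivation D \<and> cinner u (\<Delta> a w) = cinner u (D a w) \<and> cinner u (\<Delta> b w) = cinner u (D b w)"
  using assms phi_dual[of u w] unfolding weak_2_local_star_derivation_def phi_def by blast

lemma w2l_K: "weak_2_local_star_derivation \<Delta> \<Longrightarrow> a \<in> Kop \<Longrightarrow> \<Delta> a \<in> Kop"
  unfolding weak_2_local_star_derivation_def by blast

lemma sdD:
  assumes "star_derivation D" "a \<in> Kop" "b \<in> Kop"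
  shows "D a \<in> Kop" "D (opadd a b) = opadd (D a) (D b)" "D (opscale c a) = opscale c (D a)"
    "D (a \<circ> b) = opadd (D a \<circ> b) (a \<circ> D b)" "D (adj a) = adj (D a)"
  using assms unfolding star_derivation_def by blast+

lemma op_eq0:
  fixes T :: "'a::chilbert_space \<Rightarrow> 'a"
  assumes "\<And>u v. cinner u (T v) = 0" shows "T = (\<lambda>v. 0)"
proof
  fix v show "T v = 0" using assms[of "T v" v] by (simp add: cinner_eq_zero_iff)
qed

lemma polar0:
  fixes T :: "'a::chilbert_space \<Rightarrow> 'a"
  assumes T: "T \<in> Kop" and h: "\<And>v. cinner v (T v) = 0" shows "T = (\<lambda>v. 0)"
proof (rule op_eq0)
  fix u v
  have 1: "cinner u (T v) + cinner v (T u) = 0"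
    using h[of "u + v"] h[of u] h[of v] by (simp add: KopD(1)[OF T] cinner_add_left cinner_add_right add_ac)
  have "cinner u (T (\<i> *\<^sub>C v)) + cinner (\<i> *\<^sub>C v) (T u) = 0"
    using h[of "u + \<i> *\<^sub>C v"] h[of u] h[of "\<i> *\<^sub>C v"] by (simp add: KopD(1)[OF T] cinner_add_left cinner_add_right add_ac)
  hence "\<i> * cinner u (T v) - \<i> * cinner v (T u) = 0"
    by (simp add: KopD(2)[OF T] cinner_scaleC_left cinner_scaleC_right)
  hence 2: "cinner u (T v) - cinner v (T u) = 0" by (simp add: right_diff_distrib[symmetric])
  from 1 2 show "cinner u (T v) = 0" by (simp add: algebra_simps)
qed

lemma sep_eig:
  fixes x T :: "'a::chilbert_space \<Rightarrow> 'a"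
  assumes xK: "x \<in> Kop" and xsa: "adj x = x" and T: "T \<in> Kop"
    and h: "\<And>\<xi> \<eta> l1 l2. x \<xi> = l1 *\<^sub>C \<xi> \<Longrightarrow> x \<eta> = l2 *\<^sub>C \<eta> \<Longrightarrow> cinner \<xi> (T \<eta>) = 0"
  shows "T = (\<lambda>v. 0)"
proof -
  have aT: "adj T \<xi> = 0" if "x \<xi> = l1 *\<^sub>C \<xi>" for \<xi> l1
  proof (rule eig_dense[OF xK xsa], intro allI impI)
    fix e assume "\<exists>lam. x e = lam *\<^sub>C e"
    then obtain l2 where "x e = l2 *\<^sub>C e" by blast
    hence "cinner \<xi> (T e) = 0" using h that by blast
    hence "cinner (T e) \<xi> = 0" using cinner_commute[of "T e" \<xi>] by simp
    thus "cinner e (adj T \<xi>) = 0" by (simp add: adj_prop[OF T])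
  qed
  show ?thesis
  proof
    fix w
    show "T w = 0"
    proof (rule eig_dense[OF xK xsa], intro allI impI)
      fix e assume "\<exists>lam. x e = lam *\<^sub>C e"
      then obtain l1 where "x e = l1 *\<^sub>C e" by blast
      hence "adj T e = 0" by (rule aT)
      thus "cinner e (T w) = 0" using adj_prop2[OF T, of e w] by simp
    qed
  qed
qed

lemma coef:
  fixes c :: "'a::chilbert_space \<Rightarrow> 'a"
  assumes D: "star_derivation D" and c: "c \<in> Kop"
    and ce: "c \<eta> = \<alpha> *\<^sub>C \<eta>" and ace: "adj c \<xi> = \<nu> *\<^sub>C \<xi>"
  shows "cinner \<eta> \<eta> * cinner \<xi> (D c \<eta>) = (\<alpha> - cnj \<nu>) * cinner \<xi> (D (rk1 \<eta>) \<eta>)"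
proof -
  define p where "p = rk1 \<eta>"
  have pK: "p \<in> Kop" unfolding p_def by (rule rk1_Kop)
  have cp: "c \<circ> p = opscale \<alpha> p"
  proof
    fix v
    have "c (p v) = cinner \<eta> v *\<^sub>C c \<eta>" by (simp add: p_def rk1_def KopD(2)[OF c])
    thus "(c \<circ> p) v = opscale \<alpha> p v" by (simp add: ce opscale_def p_def rk1_def scaleC_scaleC mult.commute)
  qed
  have "D (c \<circ> p) = opadd (D c \<circ> p) (c \<circ> D p)" by (rule sdD(4)[OF D c pK])
  moreover have "D (c \<circ> p) = opscale \<alpha> (D p)" unfolding cp by (rule sdD(3)[OF D pK pK])
  ultimately have eq: "\<alpha> *\<^sub>C D p \<eta> = D c (p \<eta>) + c (D p \<eta>)"
    by (metis comp_apply opadd_def opscale_def)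
  have DcK: "D c \<in> Kop" by (rule sdD(1)[OF D c c])
  have "p \<eta> = cinner \<eta> \<eta> *\<^sub>C \<eta>" by (simp add: p_def rk1_def)
  hence "D c (p \<eta>) = cinner \<eta> \<eta> *\<^sub>C D c \<eta>" by (simp add: KopD(2)[OF DcK])
  moreover have "cinner \<xi> (c (D p \<eta>)) = cnj \<nu> * cinner \<xi> (D p \<eta>)"
    using adj_prop2[OF c, of \<xi> "D p \<eta>"] ace by (simp add: cinner_scaleC_left)
  ultimately have "\<alpha> * cinner \<xi> (D p \<eta>) = cinner \<eta> \<eta> * cinner \<xi> (D c \<eta>) + cnj \<nu> * cinner \<xi> (D p \<eta>)"
    using arg_cong[OF eq, of "cinner \<xi>"] by (simp add: cinner_add_right cinner_scaleC_right)
  thus ?thesis by (simp add: p_def algebra_simps)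
qed

lemma coefD:
  fixes c :: "'a::chilbert_space \<Rightarrow> 'a"
  assumes W: "weak_2_local_star_derivation \<Delta>" and c: "c \<in> Kop"
    and ce: "c \<eta> = \<alpha> *\<^sub>C \<eta>" and ace: "adj c \<xi> = \<nu> *\<^sub>C \<xi>"
  shows "cinner \<eta> \<eta> * cinner \<xi> (\<Delta> c \<eta>) = (\<alpha> - cnj \<nu>) * cinner \<xi> (\<Delta> (rk1 \<eta>) \<eta>)"
proof -
  obtain D where D: "star_derivation D" "cinner \<xi> (\<Delta> c \<eta>) = cinner \<xi> (D c \<eta>)"
      "cinner \<xi> (\<Delta> (rk1 \<eta>) \<eta>) = cinner \<xi> (D (rk1 \<eta>) \<eta>)"
    using w2l_D[OF W c rk1_Kop] by blast
  show ?thesis using coef[OF D(1) c ce ace] D(2,3) by simp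
qed



lemma gen_sub:
  fixes x :: "'a::chilbert_space \<Rightarrow> 'a"
  assumes "B \<subseteq> Kop" "x \<in> B"
    "\<forall>a\<in>B. \<forall>b\<in>B. opadd a b \<in> B"
    "\<forall>c. \<forall>a\<in>B. opscale c a \<in> B"
    "\<forall>a\<in>B. \<forall>b\<in>B. a \<circ> b \<in> B"
    "\<forall>a\<in>B. adj a \<in> B"
    "\<forall>f S. (\<forall>n. f n \<in> B) \<and> S \<in> Kop \<and> (\<lambda>n. onorm (\<lambda>v. f n v - S v)) \<longlonglongrightarrow> 0 \<longrightarrow> S \<in> B"
  shows "gen_cstar x \<subseteq> B"
  unfolding gen_cstar_def by (rule Inter_lower) (use assms in blast)

lemma opconv:
  fixes f :: "nat \<Rightarrow> 'a::chilbert_space \<Rightarrow> 'a"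
  assumes f: "\<And>n. f n \<in> Kop" and S: "S \<in> Kop" and lim: "(\<lambda>n. onorm (\<lambda>v. f n v - S v)) \<longlonglongrightarrow> 0"
  shows "(\<lambda>n. f n e) \<longlonglongrightarrow> S e" "(\<lambda>n. adj (f n) e) \<longlonglongrightarrow> adj S e"
proof -
  have lim2: "(\<lambda>n. onorm (\<lambda>v. f n v - S v) * norm e) \<longlonglongrightarrow> 0 * norm e"
    by (intro tendsto_mult lim tendsto_const)
  have dK: "(\<lambda>v. f n v - S v) \<in> Kop" for n by (rule Kop_diff_op[OF f S])
  have "(\<lambda>n. f n e - S e) \<longlonglongrightarrow> 0"
  proof (rule Lim_null_comparison[OF _ lim2[simplified]])
    show "\<forall>\<^sub>F n in sequentially. norm (f n e - S e) \<le> onorm (\<lambda>v. f n v - S v) * norm e"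
      using Kop_onorm[OF dK] by (intro always_eventually allI) (metis (no_types, lifting))
  qed
  thus "(\<lambda>n. f n e) \<longlonglongrightarrow> S e" by (simp add: LIM_zero_iff)
  have "(\<lambda>n. adj (f n) e - adj S e) \<longlonglongrightarrow> 0"
  proof (rule Lim_null_comparison[OF _ lim2[simplified]])
    show "\<forall>\<^sub>F n in sequentially. norm (adj (f n) e - adj S e) \<le> onorm (\<lambda>v. f n v - S v) * norm e"
    proof (intro always_eventually allI)
      fix n
      have "adj (f n) e - adj S e = adj (\<lambda>v. f n v - S v) e" by (simp add: adj_diffop[OF f S])
      thus "norm (adj (f n) e - adj S e) \<le> onorm (\<lambda>v. f n v - S v) * norm e"
        using adj_bound[OF dK] by simp
    qed
  qed
  thus "(\<lambda>n. adj (f n) e) \<longlonglongrightarrow> adj S e" by (simp add: LIM_zero_iff)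
qed

lemma gen_eig:
  fixes x :: "'a::chilbert_space \<Rightarrow> 'a"
  assumes xK: "x \<in> Kop" and xsa: "adj x = x"
  shows "gen_cstar x \<subseteq> {c \<in> Kop. \<forall>l e. x e = l *\<^sub>C e \<longrightarrow> (\<exists>\<mu>. c e = \<mu> *\<^sub>C e) \<and> (\<exists>\<nu>. adj c e = \<nu> *\<^sub>C e)}"
    (is "_ \<subseteq> ?B")
proof (rule gen_sub)
  show "?B \<subseteq> Kop" by blast
  show "x \<in> ?B" using xK xsa by auto
  show "\<forall>a\<in>?B. \<forall>b\<in>?B. opadd a b \<in> ?B"
  proof (intro ballI)
    fix a b assume a: "a \<in> ?B" and b: "b \<in> ?B"
    have "(\<exists>\<mu>. opadd a b e = \<mu> *\<^sub>C e) \<and> (\<exists>\<nu>. adj (opadd a b) e = \<nu> *\<^sub>C e)" if el: "x e = l *\<^sub>C e" for l e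
    proof -
      obtain \<mu>1 \<nu>1 where 1: "a e = \<mu>1 *\<^sub>C e" "adj a e = \<nu>1 *\<^sub>C e" using a el by blast
      obtain \<mu>2 \<nu>2 where 2: "b e = \<mu>2 *\<^sub>C e" "adj b e = \<nu>2 *\<^sub>C e" using b el by blast
      have aK: "a \<in> Kop" and bK: "b \<in> Kop" using a b by auto
      have "opadd a b e = (\<mu>1 + \<mu>2) *\<^sub>C e" using 1 2 by (simp add: opadd_def scaleC_add_left)
      moreover have "adj (opadd a b) e = (\<nu>1 + \<nu>2) *\<^sub>C e"
        unfolding adj_opadd[OF aK bK] using 1 2 by (simp add: opadd_def scaleC_add_left)
      ultimately show ?thesis by blast
    qed
    thus "opadd a b \<in> ?B" using a b Kop_opadd by blast
  qed
  show "\<forall>c. \<forall>a\<in>?B. opscale c a \<in> ?B"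
  proof (intro allI ballI)
    fix c a assume a: "a \<in> ?B"
    have "(\<exists>\<mu>. opscale c a e = \<mu> *\<^sub>C e) \<and> (\<exists>\<nu>. adj (opscale c a) e = \<nu> *\<^sub>C e)" if el: "x e = l *\<^sub>C e" for l e
    proof -
      obtain \<mu>1 \<nu>1 where 1: "a e = \<mu>1 *\<^sub>C e" "adj a e = \<nu>1 *\<^sub>C e" using a el by blast
      have "opscale c a e = (c * \<mu>1) *\<^sub>C e" using 1 by (simp add: opscale_def scaleC_scaleC)
      moreover have "adj (opscale c a) e = (cnj c * \<nu>1) *\<^sub>C e"
        using 1 a adj_opscale[of a c] by (simp add: opscale_def scaleC_scaleC)
      ultimately show ?thesis by blast
    qed
    thus "opscale c a \<in> ?B" using a Kop_opscale by blast
  qed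
  show "\<forall>a\<in>?B. \<forall>b\<in>?B. a \<circ> b \<in> ?B"
  proof (intro ballI)
    fix a b assume a: "a \<in> ?B" and b: "b \<in> ?B"
    have "(\<exists>\<mu>. (a \<circ> b) e = \<mu> *\<^sub>C e) \<and> (\<exists>\<nu>. adj (a \<circ> b) e = \<nu> *\<^sub>C e)" if el: "x e = l *\<^sub>C e" for l e
    proof -
      obtain \<mu>1 \<nu>1 where 1: "a e = \<mu>1 *\<^sub>C e" "adj a e = \<nu>1 *\<^sub>C e" using a el by blast
      obtain \<mu>2 \<nu>2 where 2: "b e = \<mu>2 *\<^sub>C e" "adj b e = \<nu>2 *\<^sub>C e" using b el by blast
      have aK: "a \<in> Kop" and bK: "b \<in> Kop" using a b by auto
      have "(a \<circ> b) e = (\<mu>2 * \<mu>1) *\<^sub>C e" using 1 2 by (simp add: KopD(2)[OF aK] scaleC_scaleC)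
      moreover have "adj (a \<circ> b) e = (\<nu>1 * \<nu>2) *\<^sub>C e"
        using 1 2 by (simp add: adj_comp[OF aK bK] adj_scaleC[OF bK] scaleC_scaleC)
      ultimately show ?thesis by blast
    qed
    thus "a \<circ> b \<in> ?B" using a b Kop_comp by blast
  qed
  show "\<forall>a\<in>?B. adj a \<in> ?B"
  proof (intro ballI)
    fix a assume a: "a \<in> ?B"
    have aK: "a \<in> Kop" using a by auto
    have "(\<exists>\<mu>. adj a e = \<mu> *\<^sub>C e) \<and> (\<exists>\<nu>. adj (adj a) e = \<nu> *\<^sub>C e)" if el: "x e = l *\<^sub>C e" for l e
      using a el adj_adj[OF aK] by auto
    thus "adj a \<in> ?B" using adj_Kop[OF aK] by blast
  qed
  show "\<forall>f S. (\<forall>n. f n \<in> ?B) \<and> S \<in> Kop \<and> (\<lambda>n. onorm (\<lambda>v. f n v - S v)) \<longlonglongrightarrow> 0 \<longrightarrow> S \<in> ?B"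
  proof (intro allI impI)
    fix f S assume h: "(\<forall>n. f n \<in> ?B) \<and> S \<in> Kop \<and> (\<lambda>n. onorm (\<lambda>v. f n v - S v)) \<longlonglongrightarrow> 0"
    have fK: "\<And>n. f n \<in> Kop" and SK: "S \<in> Kop" and lim: "(\<lambda>n. onorm (\<lambda>v. f n v - S v)) \<longlonglongrightarrow> 0"
      using h by auto
    have "(\<exists>\<mu>. S e = \<mu> *\<^sub>C e) \<and> (\<exists>\<nu>. adj S e = \<nu> *\<^sub>C e)" if el: "x e = l *\<^sub>C e" for l e
    proof
      show "\<exists>\<mu>. S e = \<mu> *\<^sub>C e"
        by (rule lim_line[OF _ opconv(1)[OF fK SK lim]]) (use h el in blast)
      show "\<exists>\<nu>. adj S e = \<nu> *\<^sub>C e"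
        by (rule lim_line[OF _ opconv(2)[OF fK SK lim]]) (use h el in blast)
    qed
    thus "S \<in> ?B" using SK by blast
  qed
qed

lemma real_D:
  fixes b :: "'a::chilbert_space \<Rightarrow> 'a"
  assumes D: "star_derivation D" and b: "b \<in> Kop" and bsa: "adj b = b"
  shows "Im (cinner v (D b v)) = 0"
proof -
  have DbK: "D b \<in> Kop" by (rule sdD(1)[OF D b b])
  have sa: "adj (D b) = D b" using sdD(5)[OF D b b] bsa by simp
  have "cinner v (D b v) = cinner (adj (D b) v) v" using adj_prop2[OF DbK, of v v] by simp
  also have "\<dots> = cnj (cinner v (D b v))" using sa cinner_commute by metis
  finally have "cinner v (D b v) = cnj (cinner v (D b v))" .
  thus ?thesis by (metis Im_complex_of_real Reals_cnj_iff Reals_def image_iff) 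
qed



lemma homog:
  fixes \<Delta> :: "('a::chilbert_space \<Rightarrow> 'a) \<Rightarrow> ('a \<Rightarrow> 'a)"
  assumes W: "weak_2_local_star_derivation \<Delta>" and a: "a \<in> Kop"
  shows "\<Delta> (opscale c a) = opscale c (\<Delta> a)"
proof -
  have caK: "opscale c a \<in> Kop" by (rule Kop_opscale[OF a])
  define T where "T = (\<lambda>v. \<Delta> (opscale c a) v - opscale c (\<Delta> a) v)"
  have "T = (\<lambda>v. 0)"
  proof (rule op_eq0)
    fix u v
    obtain D where D: "star_derivation D" "cinner u (\<Delta> (opscale c a) v) = cinner u (D (opscale c a) v)"
      "cinner u (\<Delta> a v) = cinner u (D a v)"
      using w2l_D[OF W caK a] by blast
    have "cinner u (\<Delta> (opscale c a) v) = c * cinner u (\<Delta> a v)"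
      using D sdD(3)[OF D(1) a a, of c] by (simp add: opscale_def cinner_scaleC_right)
    thus "cinner u (T v) = 0" by (simp add: T_def cinner_diff_right opscale_def cinner_scaleC_right)
  qed
  thus ?thesis unfolding T_def opscale_def by (metis (no_types, lifting) eq_iff_diff_eq_0)
qed

lemma addit:
  fixes \<Delta> :: "('a::chilbert_space \<Rightarrow> 'a) \<Rightarrow> ('a \<Rightarrow> 'a)"
  assumes W: "weak_2_local_star_derivation \<Delta>" and xK: "x \<in> Kop" and xsa: "adj x = x"
    and a: "a \<in> gen_cstar x" and b: "b \<in> gen_cstar x"
  shows "\<Delta> (opadd a b) = opadd (\<Delta> a) (\<Delta> b)"
proof -
  note G = gen_eig[OF xK xsa]
  have aK: "a \<in> Kop" and bK: "b \<in> Kop" using a b G by auto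
  have cK: "opadd a b \<in> Kop" by (rule Kop_opadd[OF aK bK])
  define T where "T = (\<lambda>v. \<Delta> (opadd a b) v - opadd (\<Delta> a) (\<Delta> b) v)"
  have TK: "T \<in> Kop" unfolding T_def
    by (intro Kop_diff_op Kop_opadd w2l_K[OF W] aK bK cK)
  have "T = (\<lambda>v. 0)"
  proof (rule sep_eig[OF xK xsa TK])
    fix \<xi> \<eta> l1 l2 assume x1: "x \<xi> = l1 *\<^sub>C \<xi>" and x2: "x \<eta> = l2 *\<^sub>C \<eta>"
    show "cinner \<xi> (T \<eta>) = 0"
    proof (cases "\<eta> = 0")
      case True then show ?thesis using Kop_zero[OF TK] by simp
    next
      case False
      hence ee: "cinner \<eta> \<eta> \<noteq> 0" by (simp add: cinner_eq_zero_iff)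
      obtain \<alpha>1 where a1: "a \<eta> = \<alpha>1 *\<^sub>C \<eta>" using a G x2 by blast
      obtain \<alpha>2 where a2: "b \<eta> = \<alpha>2 *\<^sub>C \<eta>" using b G x2 by blast
      obtain \<nu>1 where n1: "adj a \<xi> = \<nu>1 *\<^sub>C \<xi>" using a G x1 by blast
      obtain \<nu>2 where n2: "adj b \<xi> = \<nu>2 *\<^sub>C \<xi>" using b G x1 by blast
      have c1: "opadd a b \<eta> = (\<alpha>1 + \<alpha>2) *\<^sub>C \<eta>" using a1 a2 by (simp add: opadd_def scaleC_add_left)
      have c2: "adj (opadd a b) \<xi> = (\<nu>1 + \<nu>2) *\<^sub>C \<xi>"
        unfolding adj_opadd[OF aK bK] using n1 n2 by (simp add: opadd_def scaleC_add_left)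
      define P where "P = cinner \<xi> (\<Delta> (rk1 \<eta>) \<eta>)"
      have ea: "cinner \<eta> \<eta> * cinner \<xi> (\<Delta> a \<eta>) = (\<alpha>1 - cnj \<nu>1) * P"
        unfolding P_def by (rule coefD[OF W aK a1 n1])
      have eb: "cinner \<eta> \<eta> * cinner \<xi> (\<Delta> b \<eta>) = (\<alpha>2 - cnj \<nu>2) * P"
        unfolding P_def by (rule coefD[OF W bK a2 n2])
      have ec: "cinner \<eta> \<eta> * cinner \<xi> (\<Delta> (opadd a b) \<eta>) = ((\<alpha>1 + \<alpha>2) - cnj (\<nu>1 + \<nu>2)) * P"
        unfolding P_def by (rule coefD[OF W cK c1 c2])
      have "cinner \<eta> \<eta> * cinner \<xi> (T \<eta>) =
          cinner \<eta> \<eta> * cinner \<xi> (\<Delta> (opadd a b) \<eta>) - cinner \<eta> \<eta> * cinner \<xi> (\<Delta> a \<eta>) - cinner \<eta> \<eta> * cinner \<xi> (\<Delta> b \<eta>)"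
        by (simp add: T_def opadd_def cinner_diff_right cinner_add_right algebra_simps)
      also have "\<dots> = 0" unfolding ea eb ec by (simp add: algebra_simps)
      finally show ?thesis using ee by simp
    qed
  qed
  thus ?thesis unfolding T_def opadd_def by (metis (no_types, lifting) eq_iff_diff_eq_0)
qed

lemma partb:
  fixes \<Delta> :: "('a::chilbert_space \<Rightarrow> 'a) \<Rightarrow> ('a \<Rightarrow> 'a)"
  assumes W: "weak_2_local_star_derivation \<Delta>" and aK: "a \<in> Kop" and bK: "b \<in> Kop"
    and asa: "adj a = a" and bsa: "adj b = b"
  shows "\<Delta> (opadd a (opscale \<i> b)) = opadd (\<Delta> a) (opscale \<i> (\<Delta> b))"
proof -
  define w where "w = opadd a (opscale \<i> b)"
  have ibK: "opscale \<i> b \<in> Kop" by (rule Kop_opscale[OF bK])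
  have wK: "w \<in> Kop" unfolding w_def by (rule Kop_opadd[OF aK ibK])
  define T where "T = (\<lambda>v. \<Delta> w v - opadd (\<Delta> a) (opscale \<i> (\<Delta> b)) v)"
  have TK: "T \<in> Kop" unfolding T_def
    by (intro Kop_diff_op Kop_opadd Kop_opscale w2l_K[OF W] aK bK wK)
  have Dw: "cinner v (D w v) = cinner v (D a v) + \<i> * cinner v (D b v)" if D: "star_derivation D" for D v
  proof -
    have "D w = opadd (D a) (opscale \<i> (D b))"
      unfolding w_def sdD(2)[OF D aK ibK] sdD(3)[OF D bK bK] ..
    thus ?thesis by (simp add: opadd_def opscale_def cinner_add_right cinner_scaleC_right)
  qed
  have "T = (\<lambda>v. 0)"
  proof (rule polar0[OF TK])
    fix v
    obtain D0 where D0: "star_derivation D0" "cinner v (\<Delta> a v) = cinner v (D0 a v)"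
      "cinner v (\<Delta> b v) = cinner v (D0 b v)" using w2l_D[OF W aK bK] by blast
    obtain D1 where D1: "star_derivation D1" "cinner v (\<Delta> w v) = cinner v (D1 w v)"
      "cinner v (\<Delta> a v) = cinner v (D1 a v)" using w2l_D[OF W wK aK] by blast
    obtain D2 where D2: "star_derivation D2" "cinner v (\<Delta> w v) = cinner v (D2 w v)"
      "cinner v (\<Delta> b v) = cinner v (D2 b v)" using w2l_D[OF W wK bK] by blast
    define Z where "Z = cinner v (\<Delta> w v)"
    define A where "A = cinner v (\<Delta> a v)"
    define B where "B = cinner v (\<Delta> b v)"
    define X where "X = cinner v (D1 b v)"
    define Y where "Y = cinner v (D2 a v)"
    have imA: "Im A = 0" using real_D[OF D0(1) aK asa] D0(2) by (simp add: A_def)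
    have imB: "Im B = 0" using real_D[OF D0(1) bK bsa] D0(3) by (simp add: B_def)
    have imX: "Im X = 0" using real_D[OF D1(1) bK bsa] by (simp add: X_def)
    have imY: "Im Y = 0" using real_D[OF D2(1) aK asa] by (simp add: Y_def)
    have z1: "Z = A + \<i> * X" using D1 Dw[OF D1(1)] by (simp add: Z_def A_def X_def)
    have z2: "Z = Y + \<i> * B" using D2 Dw[OF D2(1)] by (simp add: Z_def B_def Y_def)
    have "Z = A + \<i> * B"
    proof -
      have "Re Z = Re A" "Im Z = Re X" using z1 imA imX by simp_all
      moreover have "Re Z = Re Y" "Im Z = Re B" using z2 imY imB by simp_all
      ultimately show ?thesis using imA imB by (simp add: complex_eq_iff)
    qed
    thus "cinner v (T v) = 0"
      by (simp add: T_def Z_def A_def B_def opadd_def opscale_def cinner_diff_right cinner_add_right cinner_scaleC_right)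
  qed
  thus ?thesis unfolding T_def w_def opadd_def opscale_def by (metis (no_types, lifting) eq_iff_diff_eq_0)
qed

theorem corollary3p8:
  fixes \<Delta> :: "('a::chilbert_space \<Rightarrow> 'a) \<Rightarrow> ('a \<Rightarrow> 'a)"
  assumes "weak_2_local_star_derivation \<Delta>"
  shows "quasi_linear \<Delta>"
  unfolding quasi_linear_def
proof (intro conjI ballI impI allI)
  fix x a b :: "'a \<Rightarrow> 'a" assume "x \<in> Kop" "adj x = x" "a \<in> gen_cstar x" "b \<in> gen_cstar x"
  thus "\<Delta> (opadd a b) = opadd (\<Delta> a) (\<Delta> b)" using addit[OF assms] by blast
next
  fix x a :: "'a \<Rightarrow> 'a" and c assume "x \<in> Kop" "adj x = x" "a \<in> gen_cstar x"
  moreover have "gen_cstar x \<subseteq> Kop" using gen_eig[OF \<open>x \<in> Kop\<close> \<open>adj x = x\<close>] by blast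
  ultimately show "\<Delta> (opscale c a) = opscale c (\<Delta> a)" using homog[OF assms] by blast
next
  fix a b :: "'a \<Rightarrow> 'a" assume "a \<in> Kop" "b \<in> Kop" "adj a = a" "adj b = b"
  thus "\<Delta> (opadd a (opscale \<i> b)) = opadd (\<Delta> a) (opscale \<i> (\<Delta> b))" using partb[OF assms] by blast
qed



end
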